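(* Let $n\ge2$, $\alpha>0$, and let $\zeta\in C^\infty_c(\mathbb{R}^n)$ with support contained in $\{|x|<1\}$ and $\zeta\equiv1$ in a neighborhood of the origin. Let $\Omega$ be as in the context with $0\in\Omega$ and $\operatorname{supp}\zeta\subset\Omega$. Define $$u(x)=\zeta(x)\,(-\log|x|)^{-\alpha}\sum_{i\neq j}x_ix_j\quad (x\ne0),\qquad u(0)=0 .$$ Then $u=0$ on $\Gamma$, $\partial_i^2u\in D^{0,\alpha+1}(\overline\Omega)$ for each $i=1,\dots,n$ (in particular $\Delta u\in D^{0,\alpha+1}(\overline\Omega)$), but for $i\ne j$ and every $\beta>\alpha$, $\partial_i\partial_j u\notin D^{0,\beta}(\overline\Omega)$.
   Context: $\Omega\subset\mathbb{R}^n$ is an open, bounded, connected set, locally situated on one side of its boundary $\Gamma$, and $\Gamma$ is of class $C^{2,\lambda}$ for some $0<\lambda\le1$. For $\alpha>0$ and $f\in C(\overline\Omega)$ define $$[f]_\alpha=\sup_{x,y\in\overline\Omega,\ 0<|x-y|<1}\frac{|f(x)-f(y)|}{(-\log|x-y|)^{-\alpha}},$$ and $D^{0,\alpha}(\overline\Omega)=\{f\in C(\overline\Omega):[f]_\alpha<\infty\}$. *)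

theory Defs
  imports "HOL-Analysis.Analysis"
begin

definition dir_curve :: "'n::finite \<Rightarrow> (real^'n \<Rightarrow> real) \<Rightarrow> real^'n \<Rightarrow> real \<Rightarrow> real" where
  "dir_curve i f x = (\<lambda>t. f (x + t *\<^sub>R axis i 1))"

definition has_partial :: "'n::finite \<Rightarrow> (real^'n \<Rightarrow> real) \<Rightarrow> real^'n \<Rightarrow> bool" where
  "has_partial i f x \<longleftrightarrow> dir_curve i f x differentiable (at 0)"

definition partial :: "'n::finite \<Rightarrow> (real^'n \<Rightarrow> real) \<Rightarrow> real^'n \<Rightarrow> real" where
  "partial i f x = deriv (dir_curve i f x) 0"

fun partials :: "'n::finite list \<Rightarrow> (real^'n \<Rightarrow> real) \<Rightarrow> real^'n \<Rightarrow> real" where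
  "partials [] f = f"
| "partials (i # is) f = partial i (partials is f)"

definition smooth_fun :: "(real^'n::finite \<Rightarrow> real) \<Rightarrow> bool" where
  "smooth_fun f \<longleftrightarrow>
     (\<forall>is. continuous_on UNIV (partials is f) \<and> (\<forall>i x. has_partial i (partials is f) x))"

definition tsupp :: "(real^'n::finite \<Rightarrow> real) \<Rightarrow> (real^'n) set" where
  "tsupp f = closure {x. f x \<noteq> 0}"

text \<open>Domain with C^{2,lambda} boundary: near every boundary point p there is a unit vector
nu and a C^{2,lambda} function phi on the hyperplane orthogonal to nu (represented as a function on
R^n that is constant along nu) such that locally Omega is the region strictly above the graph of phi
(in the direction nu).  This also encodes that Omega lies locally on one side of its boundary.\<close>

definition C2_holder_boundary :: "real \<Rightarrow> (real^'n::finite) set \<Rightarrow> bool" where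
  "C2_holder_boundary lam \<Omega> \<longleftrightarrow>
    (\<forall>p\<in>frontier \<Omega>. \<exists>r>0. \<exists>\<nu>::real^'n. \<exists>\<phi>::real^'n \<Rightarrow> real.
       norm \<nu> = 1 \<and>
       (\<forall>x. \<phi> x = \<phi> (x - (x \<bullet> \<nu>) *\<^sub>R \<nu>)) \<and>
       (\<forall>is. length is \<le> 2 \<longrightarrow> continuous_on UNIV (partials is \<phi>)) \<and>
       (\<forall>is. length is \<le> 1 \<longrightarrow> (\<forall>i x. has_partial i (partials is \<phi>) x)) \<and>
       (\<exists>C. \<forall>i j. \<forall>x\<in>cball p r. \<forall>y\<in>cball p r.
            \<bar>partials [i, j] \<phi> x - partials [i, j] \<phi> y\<bar> \<le> C * dist x y powr lam) \<and>
       \<Omega> \<inter> ball p r = {x \<in> ball p r. x \<bullet> \<nu> > \<phi> x})"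

definition admissible_domain :: "real \<Rightarrow> (real^'n::finite) set \<Rightarrow> bool" where
  "admissible_domain lam \<Omega> \<longleftrightarrow>
     open \<Omega> \<and> bounded \<Omega> \<and> connected \<Omega> \<and> \<Omega> \<noteq> {} \<and> 0 < lam \<and> lam \<le> 1 \<and>
     C2_holder_boundary lam \<Omega>"

definition D0 :: "real \<Rightarrow> (real^'n::finite) set \<Rightarrow> (real^'n \<Rightarrow> real) \<Rightarrow> bool" where
  "D0 \<alpha> \<Omega> f \<longleftrightarrow> continuous_on (closure \<Omega>) f \<and>
     (\<exists>C. \<forall>x\<in>closure \<Omega>. \<forall>y\<in>closure \<Omega>. 0 < dist x y \<and> dist x y < 1 \<longrightarrow>
         \<bar>f x - f y\<bar> \<le> C * (- ln (dist x y)) powr (- \<alpha>))"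

end

theory Submission
  imports Defs
begin

definition hasp :: "'n::finite \<Rightarrow> (real^'n \<Rightarrow> real) \<Rightarrow> real^'n \<Rightarrow> real \<Rightarrow> bool" where
  "hasp k f x D \<longleftrightarrow> ((\<lambda>t. f (x + t *\<^sub>R axis k 1)) has_real_derivative D) (at 0)"

lemma hasp_partial: "hasp k f x D \<Longrightarrow> has_partial k f x \<and> partial k f x = D"
  unfolding hasp_def has_partial_def partial_def dir_curve_def
  by (metis DERIV_imp_deriv real_differentiable_def)

lemma has_partial_hasp: "has_partial k f x \<Longrightarrow> hasp k f x (partial k f x)"
  unfolding hasp_def has_partial_def partial_def dir_curve_def
  by (simp add: DERIV_deriv_iff_real_differentiable)

lemma hasp_local:
  assumes "hasp k g x D" "e > 0" "\<And>z. z \<in> ball x e \<Longrightarrow> f z = g z"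
  shows "hasp k f x D"
  unfolding hasp_def
proof (rule has_field_derivative_transform_within_open[where S="ball 0 e"])
  show "((\<lambda>t. g (x + t *\<^sub>R axis k 1)) has_real_derivative D) (at 0)" using assms(1) by (simp add: hasp_def)
  fix t :: real assume "t \<in> ball 0 e"
  then have "x + t *\<^sub>R axis k 1 \<in> ball x e" by (simp add: dist_norm)
  then show "g (x + t *\<^sub>R axis k 1) = f (x + t *\<^sub>R axis k 1)" using assms(3) by simp
qed (use assms in auto)

lemma hasp_frechet:
  assumes "(f has_derivative f') (at x)"
  shows "hasp k f x (f' (axis k 1))"
proof -
  have "((\<lambda>t. x + t *\<^sub>R axis k 1) has_derivative (\<lambda>t. t *\<^sub>R axis k 1)) (at 0)"
    by (auto intro!: derivative_eq_intros)
  moreover have "(f has_derivative f') (at ((\<lambda>t. x + t *\<^sub>R axis k 1) 0))" using assms by simp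
  ultimately have "((\<lambda>t. f (x + t *\<^sub>R axis k 1)) has_derivative (f' \<circ> (\<lambda>t. t *\<^sub>R axis k 1))) (at 0)"
    using diff_chain_at by (fastforce simp add: o_def)
  moreover have "linear f'" using assms has_derivative_linear by blast
  ultimately show ?thesis unfolding hasp_def has_field_derivative_def
    by (simp add: o_def linear.scaleR mult.commute[of _ "f' (axis k 1)"])
qed


lemma hasp_const: "hasp k (\<lambda>x. c) x 0"
  unfolding hasp_def by simp

lemma hasp_coord: "hasp k (\<lambda>x. x $ j) x (if j = k then 1 else 0)"
  unfolding hasp_def by (auto intro!: derivative_eq_intros simp: axis_def)

lemma hasp_add: "hasp k f x a \<Longrightarrow> hasp k g x b \<Longrightarrow> hasp k (\<lambda>x. f x + g x) x (a + b)"
  unfolding hasp_def by (rule DERIV_add)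

lemma hasp_diff: "hasp k f x a \<Longrightarrow> hasp k g x b \<Longrightarrow> hasp k (\<lambda>x. f x - g x) x (a - b)"
  unfolding hasp_def by (rule DERIV_diff)

lemma hasp_mult: "hasp k f x a \<Longrightarrow> hasp k g x b \<Longrightarrow> hasp k (\<lambda>x. f x * g x) x (a * g x + f x * b)"
  unfolding hasp_def by (drule (1) DERIV_mult) (simp add: mult.commute)

lemma hasp_chain: "hasp k f x a \<Longrightarrow> DERIV g (f x) :> b \<Longrightarrow> hasp k (\<lambda>x. g (f x)) x (b * a)"
  unfolding hasp_def using DERIV_chain'[of "\<lambda>t. f (x + t *\<^sub>R axis k 1)" a 0 UNIV g b] by simp

lemma hasp_sum: "finite S \<Longrightarrow> (\<And>j. j \<in> S \<Longrightarrow> hasp k (f j) x (a j)) \<Longrightarrow> hasp k (\<lambda>x. \<Sum>j\<in>S. f j x) x (\<Sum>j\<in>S. a j)"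
  unfolding hasp_def by (rule DERIV_sum)

lemma hasp_norm: "x \<noteq> 0 \<Longrightarrow> hasp k norm x (x $ k / norm x)"
proof -
  assume "x \<noteq> 0"
  from hasp_frechet[OF has_derivative_norm[OF this], of k]
  show ?thesis by (simp add: inner_axis' sgn_div_norm divide_inverse mult.commute)
qed

lemma hasp_unique: "hasp k f x a \<Longrightarrow> hasp k f x b \<Longrightarrow> a = b"
  unfolding hasp_def using DERIV_unique by blast

definition SM :: "(real^'n::finite) set \<Rightarrow> (real^'n \<Rightarrow> real) \<Rightarrow> bool" where
  "SM U f \<longleftrightarrow> (\<forall>is. continuous_on U (partials is f) \<and> (\<forall>x\<in>U. \<forall>k. has_partial k (partials is f) x))"

lemma partial_local:
  assumes "open U" "x \<in> U" "\<And>z. z \<in> U \<Longrightarrow> f z = g z" "has_partial k g x"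
  shows "has_partial k f x \<and> partial k f x = partial k g x"
proof -
  obtain e where e: "e > 0" "ball x e \<subseteq> U" using assms(1,2) open_contains_ball by blast
  have "hasp k f x (partial k g x)"
    by (rule hasp_local[OF has_partial_hasp[OF assms(4)] e(1)]) (use e assms(3) in auto)
  then show ?thesis using hasp_partial by blast
qed

lemma partials_local:
  assumes "open U" "\<And>z. z \<in> U \<Longrightarrow> f z = g z" "SM U g"
  shows "z \<in> U \<Longrightarrow> partials is f z = partials is g z"
proof (induction "is" arbitrary: z)
  case Nil then show ?case using assms(2) by simp
next
  case (Cons k "is")
  have "has_partial k (partials is g) z" using assms(3) Cons.prems unfolding SM_def by blast
  then show ?case using partial_local[OF assms(1) Cons.prems, of "partials is f" "partials is g" k] Cons.IH
    by simp
qed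

lemma SM_local:
  assumes "open U" "\<And>z. z \<in> U \<Longrightarrow> f z = g z" "SM U g"
  shows "SM U f"
  unfolding SM_def
proof (intro allI conjI ballI)
  fix "is"
  show "continuous_on U (partials is f)"
    using assms(3) partials_local[OF assms] unfolding SM_def
    by (metis (mono_tags, lifting) continuous_on_cong)
  fix x k assume "x \<in> U"
  have "has_partial k (partials is g) x" using assms(3) \<open>x \<in> U\<close> unfolding SM_def by blast
  then show "has_partial k (partials is f) x"
    using partial_local[OF assms(1) \<open>x \<in> U\<close>, of "partials is f" "partials is g" k] partials_local[OF assms]
    by blast
qed

lemma SM_class:
  assumes U: "open U"
    and A: "\<And>f. f \<in> A \<Longrightarrow> continuous_on U f \<and> (\<forall>k. \<exists>h\<in>A. \<forall>x\<in>U. hasp k f x (h x))"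
  shows "f \<in> A \<Longrightarrow> SM U f"
proof -
  have main: "\<forall>f\<in>A. \<exists>h\<in>A. \<forall>x\<in>U. partials is f x = h x" for "is"
  proof (induction "is")
    case Nil then show ?case by auto
  next
    case (Cons k "is")
    show ?case
    proof
      fix f assume "f \<in> A"
      then obtain h where h: "h \<in> A" "\<And>x. x \<in> U \<Longrightarrow> partials is f x = h x" using Cons by blast
      then obtain h' where h': "h' \<in> A" "\<And>x. x \<in> U \<Longrightarrow> hasp k h x (h' x)" using A by blast
      have "partials (k # is) f x = h' x" if "x \<in> U" for x
      proof -
        obtain e where e: "e > 0" "ball x e \<subseteq> U" using U \<open>x \<in> U\<close> open_contains_ball by blast
        have "hasp k (partials is f) x (h' x)"
          by (rule hasp_local[OF h'(2)[OF \<open>x \<in> U\<close>] e(1)]) (use e h in auto)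
        from hasp_partial[OF this] show ?thesis by simp
      qed
      then show "\<exists>h\<in>A. \<forall>x\<in>U. partials (k # is) f x = h x" using h' by blast
    qed
  qed
  assume "f \<in> A"
  show "SM U f"
    unfolding SM_def
  proof (intro allI conjI ballI)
    fix "is"
    obtain h where h: "h \<in> A" "\<And>x. x \<in> U \<Longrightarrow> partials is f x = h x" using main \<open>f \<in> A\<close> by blast
    show "continuous_on U (partials is f)"
      using A[OF h(1)] h(2) by (metis (mono_tags, lifting) continuous_on_cong)
    fix x k assume "x \<in> U"
    obtain h' where h': "h' \<in> A" "\<And>x. x \<in> U \<Longrightarrow> hasp k h x (h' x)" using A[OF h(1)] by blast
    obtain e where e: "e > 0" "ball x e \<subseteq> U" using U \<open>x \<in> U\<close> open_contains_ball by blast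
    have "hasp k (partials is f) x (h' x)"
      by (rule hasp_local[OF h'(2)[OF \<open>x \<in> U\<close>] e(1)]) (use e h in auto)
    then show "has_partial k (partials is f) x" using hasp_partial by blast
  qed
qed

lemma SM_Un: "open U1 \<Longrightarrow> open U2 \<Longrightarrow> SM U1 f \<Longrightarrow> SM U2 f \<Longrightarrow> SM (U1 \<union> U2) f"
  unfolding SM_def by (auto intro: continuous_on_open_Un)

lemma partials_zero: "partials is (\<lambda>x. 0::real) = (\<lambda>x. 0)"
proof (induction "is")
  case (Cons k "is")
  have "partial k (\<lambda>x. 0::real) x = 0" for x :: "real^'a"
    using hasp_partial[OF hasp_const[of k 0 x]] by simp
  then show ?case using Cons by simp
qed simp

lemma SM_zero: "SM U (\<lambda>x. 0)"
  unfolding SM_def partials_zero using hasp_partial[OF hasp_const] by auto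


inductive_set Alg :: "(real^'n::finite \<Rightarrow> real) \<Rightarrow> (real^'n \<Rightarrow> real) set" for \<zeta> where
  const: "(\<lambda>x. c) \<in> Alg \<zeta>"
| coord: "(\<lambda>x. x $ k) \<in> Alg \<zeta>"
| invN: "(\<lambda>x. inverse (norm x ^ 2)) \<in> Alg \<zeta>"
| Lp: "(\<lambda>x. (- ln (norm x)) powr c) \<in> Alg \<zeta>"
| zp: "partials is \<zeta> \<in> Alg \<zeta>"
| add: "f \<in> Alg \<zeta> \<Longrightarrow> g \<in> Alg \<zeta> \<Longrightarrow> (\<lambda>x. f x + g x) \<in> Alg \<zeta>"
| mul: "f \<in> Alg \<zeta> \<Longrightarrow> g \<in> Alg \<zeta> \<Longrightarrow> (\<lambda>x. f x * g x) \<in> Alg \<zeta>"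

definition U0 :: "(real^'n::finite) set" where "U0 = ball 0 1 - {0}"

lemma open_U0: "open U0" unfolding U0_def by auto

lemma U0_iff: "x \<in> U0 \<longleftrightarrow> x \<noteq> 0 \<and> norm x < 1" unfolding U0_def by auto

lemma hasp_invN:
  assumes "x \<noteq> 0"
  shows "hasp k (\<lambda>x. inverse (norm x ^ 2)) x ((-2) * (x $ k * (inverse (norm x ^ 2) * inverse (norm x ^ 2))))"
proof -
  have n: "norm x > 0" using assms by simp
  have "DERIV (\<lambda>s. inverse (s ^ 2)) (norm x) :> - (2 * norm x) / (norm x ^ 2) ^ 2"
    using n by (auto intro!: derivative_eq_intros simp: power2_eq_square divide_inverse)
  from hasp_chain[OF hasp_norm[OF assms] this] show ?thesis
    using n by (simp add: field_simps power2_eq_square)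
qed

lemma hasp_Lp:
  assumes "x \<noteq> 0" "norm x < 1"
  shows "hasp k (\<lambda>x. (- ln (norm x)) powr c) x ((-c) * ((- ln (norm x)) powr (c - 1) * (x $ k * inverse (norm x ^ 2))))"
proof -
  have n: "norm x > 0" using assms by simp
  have l: "- ln (norm x) > 0" using assms n by simp
  have "DERIV (\<lambda>s. - ln s) (norm x) :> - inverse (norm x)"
    using n by (auto intro!: derivative_eq_intros simp: divide_inverse)
  from DERIV_fun_powr[OF this l, of c]
  have "DERIV (\<lambda>s. (- ln s) powr c) (norm x) :> c * (- ln (norm x)) powr (c - 1) * (- inverse (norm x))"
    by simp
  from hasp_chain[OF hasp_norm[OF assms(1)] this] show ?thesis
    using n by (simp add: field_simps power2_eq_square)
qed

lemma Alg_props: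
  assumes sm: "smooth_fun \<zeta>"
  shows "f \<in> Alg \<zeta> \<Longrightarrow> continuous_on U0 f \<and> (\<forall>k. \<exists>h\<in>Alg \<zeta>. \<forall>x\<in>U0. hasp k f x (h x))"
proof (induction rule: Alg.induct)
  case (const c)
  then show ?case using hasp_const Alg.const by fastforce
next
  case (coord j)
  have "continuous_on U0 (\<lambda>x. x $ j)" by (intro continuous_intros)
  moreover have "\<exists>h\<in>Alg \<zeta>. \<forall>x\<in>U0. hasp k (\<lambda>x. x $ j) x (h x)" for k
    by (rule bexI[of _ "\<lambda>x. if j = k then 1 else 0"]) (use hasp_coord[of k j] in \<open>auto intro: Alg.const\<close>)
  ultimately show ?case by blast
next
  case invN
  have "continuous_on U0 (\<lambda>x. inverse (norm x ^ 2))" by (intro continuous_intros) (auto simp: U0_iff)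
  moreover have "\<exists>h\<in>Alg \<zeta>. \<forall>x\<in>U0. hasp k (\<lambda>x. inverse (norm x ^ 2)) x (h x)" for k
    by (rule bexI[of _ "\<lambda>x. (-2) * (x $ k * (inverse (norm x ^ 2) * inverse (norm x ^ 2)))"])
      (use hasp_invN in \<open>force simp: U0_iff\<close>,
       rule Alg.mul[OF Alg.const Alg.mul[OF Alg.coord Alg.mul[OF Alg.invN Alg.invN]]])
  ultimately show ?case by blast
next
  case (Lp c)
  have "continuous_on U0 (\<lambda>x. (- ln (norm x)) powr c)"
    by (intro continuous_intros) (auto simp: U0_iff)
  moreover have "\<exists>h\<in>Alg \<zeta>. \<forall>x\<in>U0. hasp k (\<lambda>x. (- ln (norm x)) powr c) x (h x)" for k
    by (rule bexI[of _ "\<lambda>x. (-c) * ((- ln (norm x)) powr (c - 1) * (x $ k * inverse (norm x ^ 2)))"])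
      (use hasp_Lp in \<open>force simp: U0_iff\<close>,
       rule Alg.mul[OF Alg.const Alg.mul[OF Alg.Lp Alg.mul[OF Alg.coord Alg.invN]]])
  ultimately show ?case by blast
next
  case (zp "is")
  have "continuous_on U0 (partials is \<zeta>)"
    using sm unfolding smooth_fun_def by (meson continuous_on_subset subset_UNIV)
  moreover have "\<exists>h\<in>Alg \<zeta>. \<forall>x\<in>U0. hasp k (partials is \<zeta>) x (h x)" for k
  proof (rule bexI[of _ "partials (k # is) \<zeta>"])
    show "\<forall>x\<in>U0. hasp k (partials is \<zeta>) x (partials (k # is) \<zeta> x)"
      using sm has_partial_hasp unfolding smooth_fun_def by force
  qed (rule Alg.zp)
  ultimately show ?case by blast
next
  case (add f g)
  have "continuous_on U0 (\<lambda>x. f x + g x)" using add by (intro continuous_intros) auto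
  moreover have "\<exists>h\<in>Alg \<zeta>. \<forall>x\<in>U0. hasp k (\<lambda>x. f x + g x) x (h x)" for k
  proof -
    obtain a where a: "a \<in> Alg \<zeta>" "\<forall>x\<in>U0. hasp k f x (a x)" using add by blast
    obtain b where b: "b \<in> Alg \<zeta>" "\<forall>x\<in>U0. hasp k g x (b x)" using add by blast
    show ?thesis
      by (rule bexI[of _ "\<lambda>x. a x + b x"]) (use a b in \<open>auto intro: hasp_add Alg.add\<close>)
  qed
  ultimately show ?case by blast
next
  case (mul f g)
  have "continuous_on U0 (\<lambda>x. f x * g x)" using mul by (intro continuous_intros) auto
  moreover have "\<exists>h\<in>Alg \<zeta>. \<forall>x\<in>U0. hasp k (\<lambda>x. f x * g x) x (h x)" for k
  proof -
    obtain a where a: "a \<in> Alg \<zeta>" "\<forall>x\<in>U0. hasp k f x (a x)" using mul by blast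
    obtain b where b: "b \<in> Alg \<zeta>" "\<forall>x\<in>U0. hasp k g x (b x)" using mul by blast
    show ?thesis
      by (rule bexI[of _ "\<lambda>x. a x * g x + f x * b x"])
        (use a b mul in \<open>auto intro: hasp_mult Alg.add Alg.mul\<close>)
  qed
  ultimately show ?case by blast
qed

lemma Alg_SM: "smooth_fun \<zeta> \<Longrightarrow> f \<in> Alg \<zeta> \<Longrightarrow> SM U0 f"
  by (rule SM_class[OF open_U0 Alg_props]) auto

lemma Alg_sum: "finite S \<Longrightarrow> (\<And>j. j \<in> S \<Longrightarrow> f j \<in> Alg \<zeta>) \<Longrightarrow> (\<lambda>x. \<Sum>j\<in>S. f j x) \<in> Alg \<zeta>"
proof (induction S rule: finite_induct)
  case empty then show ?case using Alg.const[of 0] by simp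
next
  case (insert a S)
  then show ?case using Alg.add[of "f a" \<zeta> "\<lambda>x. \<Sum>j\<in>S. f j x"] by simp
qed


definition ssum :: "real^'n::finite \<Rightarrow> real" where "ssum x = (\<Sum>k\<in>UNIV. x $ k)"
definition PP :: "real^'n::finite \<Rightarrow> real" where "PP x = (\<Sum>i\<in>UNIV. \<Sum>j\<in>UNIV - {i}. x $ i * x $ j)"

lemma norm_sq_sum: "(norm x)^2 = (\<Sum>k\<in>UNIV. (x $ k)^2)" for x :: "real^'n::finite"
  unfolding power2_norm_eq_inner inner_vec_def by (simp add: power2_eq_square)

lemma PP_eq: "PP x = (ssum x)^2 - (norm x)^2"
proof -
  have "PP x = (\<Sum>i\<in>UNIV. x $ i * (ssum x - x $ i))"
    unfolding PP_def ssum_def by (simp add: sum_distrib_left[symmetric] sum_diff1)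
  also have "\<dots> = (\<Sum>i\<in>UNIV. x $ i * ssum x) - (\<Sum>i\<in>UNIV. (x $ i)^2)"
    by (simp add: algebra_simps power2_eq_square sum_subtractf)
  also have "\<dots> = (ssum x)^2 - (norm x)^2"
    by (simp only: norm_sq_sum) (simp add: ssum_def power2_eq_square sum_distrib_right)
  finally show ?thesis .
qed

lemma ssum_axis: "ssum (t *\<^sub>R axis i 1) = t"
proof -
  have "\<And>k. t * axis i (1::real) $ k = (if k = i then t else 0)" by (auto simp: axis_def)
  then show ?thesis unfolding ssum_def by simp
qed

lemma PP_axis: "PP (t *\<^sub>R axis i (1::real)) = 0"
  unfolding PP_eq ssum_axis by (simp add: power2_eq_square)

lemma hasp_ssum: "hasp k ssum x 1"
proof -
  have "hasp k (\<lambda>x. \<Sum>j\<in>UNIV. x $ j) x (\<Sum>j\<in>UNIV. if j = k then 1 else 0)"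
    by (intro hasp_sum hasp_coord) simp
  then show ?thesis by (simp add: ssum_def[abs_def])
qed

lemma hasp_nsq: "hasp k (\<lambda>x. (norm x)^2) x (2 * x $ k)"
proof -
  have d: "DERIV (\<lambda>s. s^2) (x $ j) :> 2 * x $ j" for j
    by (auto intro!: derivative_eq_intros)
  have "hasp k (\<lambda>x. \<Sum>j\<in>UNIV. (x $ j)^2) x (\<Sum>j\<in>UNIV. 2 * x $ j * (if j = k then 1 else 0))"
    by (intro hasp_sum hasp_chain[OF hasp_coord d]) simp
  moreover have "(\<lambda>x. (norm x)^2) = (\<lambda>x::real^'a. \<Sum>j\<in>UNIV. (x $ j)^2)" using norm_sq_sum by blast
  moreover have "(\<Sum>j\<in>UNIV. 2 * x $ j * (if j = k then 1 else 0)) = 2 * x $ k"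
    by (simp add: if_distrib[where f="\<lambda>y. 2 * x $ _ * y"] cong: if_cong)
  ultimately show ?thesis by simp
qed

lemma hasp_PP: "hasp k PP x (2 * (ssum x - x $ k))"
proof -
  have "hasp k (\<lambda>x. (ssum x)^2 - (norm x)^2) x (2 * ssum x * 1 - 2 * x $ k)"
  proof (rule hasp_diff[OF hasp_chain[OF hasp_ssum] hasp_nsq])
    show "DERIV (\<lambda>s. s^2) (ssum x) :> 2 * ssum x" by (auto intro!: derivative_eq_intros)
  qed
  then show ?thesis by (simp add: PP_eq[abs_def] algebra_simps)
qed

lemma PP_Alg: "PP \<in> Alg \<zeta>"
  unfolding PP_def[abs_def]
  by (intro Alg_sum Alg.mul Alg.coord finite_Diff finite)

locale ctx =
  fixes \<zeta> u :: "real^'n::finite \<Rightarrow> real" and \<alpha> :: real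
  assumes alpha: "\<alpha> > 0" and sm: "smooth_fun \<zeta>" and supp: "tsupp \<zeta> \<subseteq> ball 0 1"
    and one: "\<exists>r>0. \<forall>x\<in>ball 0 r. \<zeta> x = 1"
    and udef: "\<And>x. u x = (if x = 0 then 0 else
                 \<zeta> x * (- ln (norm x)) powr (- \<alpha>) * (\<Sum>i\<in>UNIV. \<Sum>j\<in>UNIV - {i}. x $ i * x $ j))"
begin

lemma u_eq: "u x = (if x = 0 then 0 else \<zeta> x * (- ln (norm x)) powr (- \<alpha>) * PP x)"
  using udef by (simp add: PP_def)

lemma zeta_out: "x \<notin> tsupp \<zeta> \<Longrightarrow> \<zeta> x = 0"
  unfolding tsupp_def using closure_subset[of "{x. \<zeta> x \<noteq> 0}"] by auto

lemma SM_u: "SM (- {0}) u"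
proof -
  have zA: "\<zeta> \<in> Alg \<zeta>" using Alg.zp[of "[]" \<zeta>] by simp
  have gA: "(\<lambda>x. \<zeta> x * (- ln (norm x)) powr (- \<alpha>) * PP x) \<in> Alg \<zeta>"
    by (rule Alg.mul[OF Alg.mul[OF zA Alg.Lp] PP_Alg])
  have S1: "SM U0 u"
    by (rule SM_local[OF open_U0 _ Alg_SM[OF sm gA]]) (simp add: u_eq U0_iff)
  have o: "open (- tsupp \<zeta>)" by (simp add: tsupp_def open_Compl)
  have S2: "SM (- tsupp \<zeta>) u"
    by (rule SM_local[OF o _ SM_zero]) (simp add: u_eq zeta_out)
  have "U0 \<union> - tsupp \<zeta> = - {0}"
  proof
    obtain r where r: "r > 0" "\<forall>x\<in>ball 0 r. \<zeta> x = 1" using one by blast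
    then have "\<zeta> 0 \<noteq> 0" by simp
    then have "0 \<in> tsupp \<zeta>" unfolding tsupp_def using closure_subset[of "{x. \<zeta> x \<noteq> 0}"] by auto
    then show "U0 \<union> - tsupp \<zeta> \<subseteq> - {0}" by (auto simp: U0_iff)
    show "- {0} \<subseteq> U0 \<union> - tsupp \<zeta>"
    proof
      fix x :: "real^'n" assume "x \<in> - {0}"
      then show "x \<in> U0 \<union> - tsupp \<zeta>" using supp by (cases "norm x < 1") (auto simp: U0_iff)
    qed
  qed
  then show ?thesis using SM_Un[OF open_U0 o S1 S2] by simp
qed

end

lemma hasp_line_local:
  assumes "hasp k g x D" "e > 0" "\<And>t. \<bar>t\<bar> < e \<Longrightarrow> f (x + t *\<^sub>R axis k 1) = g (x + t *\<^sub>R axis k 1)"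
  shows "hasp k f x D"
  unfolding hasp_def
proof (rule has_field_derivative_transform_within_open[where S="ball 0 e"])
  show "((\<lambda>t. g (x + t *\<^sub>R axis k 1)) has_real_derivative D) (at 0)" using assms(1) by (simp add: hasp_def)
  fix t :: real assume "t \<in> ball 0 e"
  then show "g (x + t *\<^sub>R axis k 1) = f (x + t *\<^sub>R axis k 1)" using assms(3) by (simp add: dist_norm)
qed (use assms in auto)

lemma hasp_cmult: "hasp k f x a \<Longrightarrow> hasp k (\<lambda>x. c * f x) x (c * a)"
  using hasp_mult[OF hasp_const[of k c x]] by simp

definition Lf :: "real^'n::finite \<Rightarrow> real" where "Lf x = - ln (norm x)"

lemma Lf_pos: "x \<noteq> 0 \<Longrightarrow> norm x < 1 \<Longrightarrow> Lf x > 0"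
  unfolding Lf_def by simp

lemma alg_id1: "(L::real) \<noteq> 0 \<Longrightarrow>
  \<alpha> * (((-(-\<alpha>-1)) * ((a/L) * (xi * I))) * (xi * (P * I))
       + a * (1 * (P * I) + xi * ((2 * (s - xi)) * I + P * ((-2) * (xi * (I * I))))))
     + 2 * (((-(-\<alpha>)) * (a * (xi * I))) * (s - xi) + (a * L) * (1 - 1))
  = a * (\<alpha> * (P * I + 4 * (xi * (s - xi)) * I - 2 * xi^2 * P * I^2)) + (a / L) * (\<alpha> * (\<alpha> + 1) * (xi^2 * P * I^2))"
  by (simp add: field_simps power2_eq_square)

context ctx begin

definition G :: "'n \<Rightarrow> real^'n \<Rightarrow> real" where
  "G k x = \<alpha> * (Lf x powr (-\<alpha>-1) * (x$k * (PP x * inverse (norm x ^ 2))))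
           + 2 * (Lf x powr (-\<alpha>) * (ssum x - x$k))"

definition H1 :: "'n \<Rightarrow> real^'n \<Rightarrow> real" where
  "H1 i x = \<alpha> * (PP x * inverse (norm x ^ 2) + 4 * (x$i * (ssum x - x$i)) * inverse (norm x ^ 2)
             - 2 * (x$i)^2 * PP x * inverse (norm x ^ 2)^2)"

definition H2 :: "'n \<Rightarrow> real^'n \<Rightarrow> real" where
  "H2 i x = \<alpha> * (\<alpha> + 1) * ((x$i)^2 * PP x * inverse (norm x ^ 2)^2)"

definition F :: "'n \<Rightarrow> real^'n \<Rightarrow> real" where
  "F i x = Lf x powr (-\<alpha>-1) * H1 i x + Lf x powr (-\<alpha>-2) * H2 i x"

lemma hasp_g1:
  assumes "x \<noteq> 0" "norm x < 1"
  shows "hasp k (\<lambda>x. Lf x powr (-\<alpha>) * PP x) x (G k x)"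
proof -
  have "hasp k (\<lambda>x. Lf x powr (-\<alpha>) * PP x) x
     (((- (-\<alpha>)) * (Lf x powr (-\<alpha> - 1) * (x $ k * inverse (norm x ^ 2)))) * PP x + Lf x powr (-\<alpha>) * (2 * (ssum x - x $ k)))"
    unfolding Lf_def[abs_def] by (rule hasp_mult[OF hasp_Lp[OF assms] hasp_PP])
  then show ?thesis unfolding G_def by (simp add: algebra_simps)
qed

lemma hasp_G:
  assumes x: "x \<noteq> 0" "norm x < 1"
  shows "hasp i (G i) x (F i x)"
proof -
  let ?L = "Lf x" let ?a = "Lf x powr (-\<alpha>-1)" let ?I = "inverse (norm x ^ 2)"
  have Lp: "?L > 0" using Lf_pos[OF x] .
  have dA: "hasp i (\<lambda>x. Lf x powr (-\<alpha>-1)) x ((-(-\<alpha>-1)) * (Lf x powr (-\<alpha>-1-1) * (x $ i * ?I)))"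
    unfolding Lf_def[abs_def] by (rule hasp_Lp[OF x])
  have dE: "hasp i (\<lambda>x. Lf x powr (-\<alpha>)) x ((-(-\<alpha>)) * (Lf x powr (-\<alpha>-1) * (x $ i * ?I)))"
    unfolding Lf_def[abs_def] by (rule hasp_Lp[OF x])
  have dB: "hasp i (\<lambda>x. x $ i) x 1" using hasp_coord[of i i x] by simp
  have dD: "hasp i (\<lambda>x. inverse (norm x ^ 2)) x ((-2) * (x $ i * (?I * ?I)))" by (rule hasp_invN[OF x(1)])
  have dSB: "hasp i (\<lambda>x. ssum x - x $ i) x (1 - 1)" by (rule hasp_diff[OF hasp_ssum dB])
  have "hasp i (G i) x
    (\<alpha> * (((-(-\<alpha>-1)) * (Lf x powr (-\<alpha>-1-1) * (x $ i * ?I))) * (x$i * (PP x * ?I))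
       + ?a * (1 * (PP x * ?I) + x $ i * ((2 * (ssum x - x $ i)) * ?I + PP x * ((-2) * (x $ i * (?I * ?I))))))
     + 2 * (((-(-\<alpha>)) * (Lf x powr (-\<alpha>-1) * (x $ i * ?I))) * (ssum x - x $ i) + Lf x powr (-\<alpha>) * (1 - 1)))"
    unfolding G_def[abs_def]
    by (intro hasp_add hasp_cmult hasp_mult dA dB dD dE dSB hasp_PP)
  note D = this
  have e1: "Lf x powr (-\<alpha>-1-1) = ?a / ?L"
  proof -
    have "Lf x powr (-\<alpha>-1-1) = Lf x powr ((-\<alpha>-1) + (-1))" by simp
    also have "\<dots> = ?a * Lf x powr (-1)" by (rule powr_add)
    also have "\<dots> = ?a / ?L" using Lp by (simp add: powr_minus divide_inverse)
    finally show ?thesis .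
  qed
  have e2: "Lf x powr (-\<alpha>-2) = ?a / ?L"
  proof -
    have "Lf x powr (-\<alpha>-2) = Lf x powr ((-\<alpha>-1) + (-1))" by (rule arg_cong[where f="\<lambda>y. Lf x powr y"]) simp
    also have "\<dots> = ?a * Lf x powr (-1)" by (rule powr_add)
    also have "\<dots> = ?a / ?L" using Lp by (simp add: powr_minus divide_inverse)
    finally show ?thesis .
  qed
  have E: "Lf x powr (-\<alpha>) = ?a * ?L"
  proof -
    have "Lf x powr (-\<alpha>) = Lf x powr ((-\<alpha>-1) + 1)" by (rule arg_cong[where f="\<lambda>y. Lf x powr y"]) simp
    also have "\<dots> = ?a * Lf x powr 1" by (rule powr_add)
    also have "\<dots> = ?a * ?L" using Lp by simp
    finally show ?thesis .
  qed
  have Lne: "?L \<noteq> 0" using Lp by simp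
  show ?thesis using D unfolding F_def H1_def H2_def e2 e1 E alg_id1[OF Lne] .
qed

end

lemma lnabs_lim: "LIM y at (0::real). - ln \<bar>y\<bar> :> at_top"
proof -
  have "filterlim abs (at_right 0) (at (0::real))"
    unfolding filterlim_at
    by (auto simp: eventually_at_filter intro!: tendsto_rabs_zero tendsto_ident_at)
  then have "LIM y at (0::real). ln \<bar>y\<bar> :> at_bot"
    by (rule filterlim_compose[OF ln_at_0])
  then show ?thesis using filterlim_uminus_at_bot[THEN iffD1] by blast
qed

lemma lnabs_powr_lim: "c > 0 \<Longrightarrow> ((\<lambda>y. (- ln \<bar>y\<bar>) powr (-c)) \<longlongrightarrow> 0) (at (0::real))"
  by (rule tendsto_neg_powr[OF _ lnabs_lim]) simp

lemma DERIV_h0: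
  assumes "c > 0"
  shows "((\<lambda>t. if t = 0 then 0 else 2 * (t * (- ln \<bar>t\<bar>) powr (-c))) has_real_derivative 0) (at 0)"
  unfolding has_field_derivative_iff
proof -
  have "((\<lambda>y. 2 * (- ln \<bar>y\<bar>) powr (-c)) \<longlongrightarrow> 0) (at (0::real))"
    using tendsto_mult_right_zero[OF lnabs_powr_lim[OF assms], of 2] by simp
  then show "((\<lambda>y. ((if y = 0 then 0 else 2 * (y * (- ln \<bar>y\<bar>) powr (-c))) -
                    (if (0::real) = 0 then 0 else 2 * (0 * (- ln \<bar>0::real\<bar>) powr (-c)))) / (y - 0)) \<longlongrightarrow> 0) (at 0)"
    by (rule tendsto_cong[THEN iffD1, rotated]) (auto simp: eventually_at_filter)
qed

context ctx begin

definition r0 where "r0 = (SOME r. r > 0 \<and> (\<forall>x\<in>ball 0 r. \<zeta> x = 1))"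

lemma r0: "r0 > 0" "norm x < r0 \<Longrightarrow> \<zeta> x = 1"
  using someI_ex[OF one] unfolding r0_def[symmetric] by auto

definition rho where "rho = min r0 (exp (-1))"

lemma rho: "rho > 0" "rho < 1" "rho \<le> exp (-1)" "norm x < rho \<Longrightarrow> \<zeta> x = 1"
proof -
  have e: "exp (-1::real) < 1" by simp
  show "rho < 1" unfolding rho_def using e by (meson min.strict_coboundedI2)
  show "rho > 0" "rho \<le> exp (-1)" "norm x < rho \<Longrightarrow> \<zeta> x = 1"
    using r0 unfolding rho_def by auto
qed

lemma E1: "x \<noteq> 0 \<Longrightarrow> norm x < rho \<Longrightarrow> u x = Lf x powr (-\<alpha>) * PP x"
  using rho(4) by (simp add: u_eq Lf_def)

lemma near_ball:
  assumes "x \<noteq> 0" "norm x < rho" "z \<in> ball x (min (rho - norm x) (norm x))"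
  shows "z \<noteq> 0" "norm z < rho"
proof -
  have "dist x z < rho - norm x" "dist x z < norm x" using assms(3) by auto
  moreover have "norm z \<le> norm x + dist x z" "norm x \<le> norm z + dist x z"
    using norm_triangle_ineq[of x "z - x"] norm_triangle_ineq[of z "x - z"]
    by (auto simp: dist_norm norm_minus_commute)
  ultimately show "z \<noteq> 0" "norm z < rho" by auto
qed

lemma E2: assumes "x \<noteq> 0" "norm x < rho" shows "hasp k u x (G k x)"
proof (rule hasp_local[OF hasp_g1[OF assms(1)]])
  show "norm x < 1" using assms rho by simp
  show "min (rho - norm x) (norm x) > 0" using assms by simp
  fix z assume "z \<in> ball x (min (rho - norm x) (norm x))"
  from near_ball[OF assms this] show "u z = Lf z powr (-\<alpha>) * PP z" using E1 by simp
qed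

lemma E2': "x \<noteq> 0 \<Longrightarrow> norm x < rho \<Longrightarrow> partial k u x = G k x"
  using hasp_partial[OF E2] by blast

lemma E3: assumes "x \<noteq> 0" "norm x < rho" shows "hasp i (partial i u) x (F i x)"
proof (rule hasp_local[OF hasp_G[OF assms(1)]])
  show "norm x < 1" using assms rho by simp
  show "min (rho - norm x) (norm x) > 0" using assms by simp
  fix z assume "z \<in> ball x (min (rho - norm x) (norm x))"
  from near_ball[OF assms this] show "partial i u z = G i z" using E2' by simp
qed

lemma E3': "x \<noteq> 0 \<Longrightarrow> norm x < rho \<Longrightarrow> partials [i, i] u x = F i x"
  using hasp_partial[OF E3] by simp

lemma u_axis: "u (t *\<^sub>R axis k 1) = 0"
  by (simp add: u_eq PP_axis)

lemma E4: "hasp k u 0 0"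
  unfolding hasp_def using u_axis[of _ k] by simp

lemma E4': "has_partial k u 0" "partial k u 0 = 0"
  using hasp_partial[OF E4] by auto

lemma norm_axis_t: "norm (t *\<^sub>R axis k (1::real)) = \<bar>t\<bar>"
  by simp

lemma E5: "\<bar>t\<bar> < rho \<Longrightarrow> partial i u (t *\<^sub>R axis i 1) = 0"
proof (cases "t = 0")
  case True then show ?thesis using E4' by simp
next
  case False
  assume "\<bar>t\<bar> < rho"
  then have "partial i u (t *\<^sub>R axis i 1) = G i (t *\<^sub>R axis i 1)" using False by (intro E2') auto
  also have "\<dots> = 0" unfolding G_def by (simp add: PP_axis ssum_axis)
  finally show ?thesis .
qed

lemma E5h: "hasp i (partial i u) 0 0"
  by (rule hasp_line_local[OF hasp_const rho(1)]) (simp add: E5)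

lemma E5': "partials [i, i] u 0 = 0"
  using hasp_partial[OF E5h] by simp

lemma E6: assumes "i \<noteq> j" "\<bar>t\<bar> < rho"
  shows "partial j u (t *\<^sub>R axis i 1) = (if t = 0 then 0 else 2 * (t * (- ln \<bar>t\<bar>) powr (-\<alpha>)))"
proof (cases "t = 0")
  case True then show ?thesis using E4' by simp
next
  case False
  then have "partial j u (t *\<^sub>R axis i 1) = G j (t *\<^sub>R axis i 1)" using assms by (intro E2') auto
  also have "\<dots> = 2 * (t * (- ln \<bar>t\<bar>) powr (-\<alpha>))"
    unfolding G_def Lf_def using assms(1) by (simp add: PP_axis ssum_axis) (simp add: axis_def)
  finally show ?thesis using False by simp
qed

lemma E6h: assumes "i \<noteq> j" shows "hasp i (partial j u) 0 0"
  unfolding hasp_def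
proof (rule has_field_derivative_transform_within_open[OF DERIV_h0[OF alpha], where S="ball 0 rho"])
  fix t :: real assume "t \<in> ball 0 rho"
  then show "(if t = 0 then 0 else 2 * (t * (- ln \<bar>t\<bar>) powr - \<alpha>)) = partial j u (0 + t *\<^sub>R axis i 1)"
    using E6[OF assms] by simp
qed (use rho in auto)

lemma E7: assumes "i \<noteq> j" "0 < t" "t < rho"
  shows "hasp i (partial j u) (t *\<^sub>R axis i 1) (2 * (- ln t) powr (-\<alpha>) + 2 * \<alpha> * (- ln t) powr (-\<alpha>-1))"
  unfolding hasp_def
proof (rule has_field_derivative_transform_within_open[where S="ball 0 (min t (rho - t))"
      and f="\<lambda>s. 2 * ((t + s) * (- ln (t + s)) powr (-\<alpha>))"])
  have lt: "- ln t > 0" using assms rho by simp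
  have "((\<lambda>s. 2 * ((t + s) * (- ln (t + s)) powr (-\<alpha>))) has_real_derivative
      2 * (1 * (- ln (t + 0)) powr (-\<alpha>) + (t + 0) * ((-\<alpha>) * (- ln (t + 0)) powr (-\<alpha> - 1) * (- inverse (t + 0)))))
      (at 0)"
    using assms lt
    by (intro derivative_eq_intros DERIV_fun_powr[where r="-\<alpha>", simplified]) (auto simp: divide_inverse)
  then show "((\<lambda>s. 2 * ((t + s) * (- ln (t + s)) powr (-\<alpha>))) has_real_derivative
      2 * (- ln t) powr (-\<alpha>) + 2 * \<alpha> * (- ln t) powr (-\<alpha>-1)) (at 0)"
    using assms by (simp add: field_simps)
  fix s :: real assume "s \<in> ball 0 (min t (rho - t))"
  then have s: "\<bar>s\<bar> < t" "\<bar>s\<bar> < rho - t" by auto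
  have "t *\<^sub>R axis i 1 + s *\<^sub>R axis i 1 = (t + s) *\<^sub>R axis i (1::real)" by (simp add: scaleR_add_left)
  moreover have "\<bar>t + s\<bar> < rho" "t + s \<noteq> 0" "\<bar>t + s\<bar> = t + s" using s assms by auto
  ultimately show "2 * ((t + s) * (- ln (t + s)) powr (-\<alpha>)) = partial j u (t *\<^sub>R axis i 1 + s *\<^sub>R axis i 1)"
    using E6[OF assms(1), of "t + s"] by simp
qed (use assms in auto)

end

lemma mvt_bound:
  fixes h h' :: "real \<Rightarrow> real"
  assumes "\<And>s. \<bar>s\<bar> \<le> \<bar>t\<bar> \<Longrightarrow> DERIV h s :> h' s" "\<And>s. \<bar>s\<bar> \<le> \<bar>t\<bar> \<Longrightarrow> \<bar>h' s\<bar> \<le> B"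
  shows "\<bar>h t - h 0\<bar> \<le> B * \<bar>t\<bar>"
proof (cases "t = 0")
  case True then show ?thesis using assms(2)[of 0] by simp
next
  case False
  show ?thesis
  proof (cases "t > 0")
    case True
    obtain z where z: "0 < z" "z < t" "h t - h 0 = (t - 0) * h' z"
      using MVT2[OF True, of h h'] assms(1) True by auto
    then show ?thesis using assms(2)[of z] True by (simp add: abs_mult mult.commute mult_left_mono)
  next
    case f: False
    then have "t < 0" using False by simp
    obtain z where z: "t < z" "z < 0" "h 0 - h t = (0 - t) * h' z"
      using MVT2[OF \<open>t < 0\<close>, of h h'] assms(1) \<open>t < 0\<close> by auto
    then have "\<bar>h t - h 0\<bar> = \<bar>t\<bar> * \<bar>h' z\<bar>" by (simp add: abs_mult abs_minus_commute)
    also have "\<dots> \<le> \<bar>t\<bar> * B" using assms(2)[of z] z by (intro mult_left_mono) auto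
    finally show ?thesis by (simp add: mult.commute)
  qed
qed

lemma LIP:
  fixes f :: "real^'n::finite \<Rightarrow> real"
  assumes B: "B \<ge> 0" and H: "\<And>z k. z \<in> cball x (dist x y) \<Longrightarrow> has_partial k f z \<and> \<bar>partial k f z\<bar> \<le> B"
  shows "\<bar>f y - f x\<bar> \<le> real CARD('n) * B * dist x y"
proof -
  define zz where "zz F = (\<chi> k. if k \<in> F then y $ k else x $ k)" for F :: "'n set"
  have zc: "\<bar>(zz F + s *\<^sub>R axis k 1 - x) $ j\<bar> \<le> \<bar>(y - x) $ j\<bar>"
    if "k \<notin> F" "\<bar>s\<bar> \<le> \<bar>y $ k - x $ k\<bar>" for F k s j
  proof (cases "j = k")
    case True then show ?thesis using that by (simp add: zz_def)
  next
    case False then show ?thesis by (simp add: zz_def axis_def)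
  qed
  have "finite F \<Longrightarrow> \<bar>f (zz F) - f x\<bar> \<le> real (card F) * B * dist x y" for F
  proof (induction F rule: finite_induct)
    case empty
    have "zz {} = x" by (simp add: zz_def vec_eq_iff)
    then show ?case by simp
  next
    case (insert k F)
    define t where "t = y $ k - x $ k"
    have e: "zz (insert k F) = zz F + t *\<^sub>R axis k 1"
      unfolding vec_eq_iff
    proof
      fix j show "zz (insert k F) $ j = (zz F + t *\<^sub>R axis k 1) $ j"
        using insert(2) by (cases "j = k") (simp_all add: zz_def t_def axis_def)
    qed
    define h where "h s = f (zz F + s *\<^sub>R axis k 1)" for s
    have inball: "zz F + s *\<^sub>R axis k 1 \<in> cball x (dist x y)" if "\<bar>s\<bar> \<le> \<bar>t\<bar>" for s
    proof -
      have "norm (zz F + s *\<^sub>R axis k 1 - x) \<le> norm (y - x)"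
        by (rule norm_le_componentwise_cart) (use zc[OF insert(2)] that t_def in auto)
      then show ?thesis by (simp add: dist_norm norm_minus_commute)
    qed
    have "\<bar>h t - h 0\<bar> \<le> B * \<bar>t\<bar>"
    proof (rule mvt_bound)
      fix s assume s: "\<bar>s\<bar> \<le> \<bar>t\<bar>"
      have hp: "has_partial k f (zz F + s *\<^sub>R axis k 1)" using H[OF inball[OF s]] by blast
      then have "hasp k f (zz F + s *\<^sub>R axis k 1) (partial k f (zz F + s *\<^sub>R axis k 1))"
        by (rule has_partial_hasp)
      then have "((\<lambda>r. h (r + s)) has_real_derivative partial k f (zz F + s *\<^sub>R axis k 1)) (at 0)"
      proof -
        have "(\<lambda>r. h (r + s)) = (\<lambda>r. f ((zz F + s *\<^sub>R axis k 1) + r *\<^sub>R axis k 1))"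
          by (rule ext) (simp add: h_def scaleR_add_left add_ac)
        then show ?thesis using \<open>hasp k f _ _\<close> unfolding hasp_def by simp
      qed
      then show "DERIV h s :> partial k f (zz F + s *\<^sub>R axis k 1)"
        using DERIV_shift[of h _ 0 s] by simp
      show "\<bar>partial k f (zz F + s *\<^sub>R axis k 1)\<bar> \<le> B" using H[OF inball[OF s]] by blast
    qed
    moreover have "\<bar>t\<bar> \<le> dist x y" unfolding t_def dist_norm
      using component_le_norm_cart[of "y - x" k] by (simp add: norm_minus_commute)
    ultimately have "\<bar>f (zz (insert k F)) - f (zz F)\<bar> \<le> B * dist x y"
    proof -
      have "B * \<bar>t\<bar> \<le> B * dist x y" using B \<open>\<bar>t\<bar> \<le> dist x y\<close> by (rule mult_left_mono[rotated])
      then show ?thesis using \<open>\<bar>h t - h 0\<bar> \<le> B * \<bar>t\<bar>\<close> unfolding e h_def by simp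
    qed
    then show ?case using insert by (simp add: algebra_simps)
  qed
  from this[of UNIV] show ?thesis by (simp add: zz_def)
qed

lemma bound_cont:
  fixes g :: "'a::topological_space \<Rightarrow> real"
  assumes "continuous_on K g" "compact K"
  shows "\<exists>B. \<forall>z\<in>K. \<bar>g z\<bar> \<le> B"
proof -
  have "bounded (g ` K)" using compact_continuous_image[OF assms(1,2)] compact_imp_bounded by blast
  then show ?thesis unfolding bounded_iff by auto
qed

lemma GB:
  assumes "SM U g" "compact K" "K \<subseteq> U"
  shows "\<exists>B\<ge>0. \<forall>z\<in>K. \<bar>partials is g z\<bar> \<le> B \<and>
            (\<forall>k. has_partial k (partials is g) z \<and> \<bar>partial k (partials is g) z\<bar> \<le> B)"
proof -
  have c: "continuous_on K (partials js g)" for js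
    using assms(1,3) unfolding SM_def by (meson continuous_on_subset)
  obtain B0 where B0: "\<forall>z\<in>K. \<bar>partials is g z\<bar> \<le> B0" using bound_cont[OF c assms(2)] by blast
  have "\<forall>k. \<exists>B. \<forall>z\<in>K. \<bar>partials (k # is) g z\<bar> \<le> B" using bound_cont[OF c assms(2)] by blast
  then obtain Bk where Bk: "\<And>k z. z \<in> K \<Longrightarrow> \<bar>partials (k # is) g z\<bar> \<le> Bk k" by metis
  define B where "B = \<bar>B0\<bar> + (\<Sum>k\<in>UNIV. \<bar>Bk k\<bar>)"
  have le: "\<bar>Bk k\<bar> \<le> (\<Sum>k\<in>UNIV. \<bar>Bk k\<bar>)" for k
    by (rule member_le_sum) auto
  have "B \<ge> 0" unfolding B_def by (simp add: sum_nonneg)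
  moreover have "\<forall>z\<in>K. \<bar>partials is g z\<bar> \<le> B \<and>
            (\<forall>k. has_partial k (partials is g) z \<and> \<bar>partial k (partials is g) z\<bar> \<le> B)"
  proof (intro ballI conjI allI)
    fix z k assume z: "z \<in> K"
    show "\<bar>partials is g z\<bar> \<le> B" using B0 z unfolding B_def
      by (smt (verit) sum_nonneg)
    show "has_partial k (partials is g) z" using assms(1,3) z unfolding SM_def by blast
    show "\<bar>partial k (partials is g) z\<bar> \<le> B" using Bk[OF z, of k] le[of k] unfolding B_def by simp
  qed
  ultimately show ?thesis by blast
qed


definition Phi :: "real \<Rightarrow> real \<Rightarrow> real" where "Phi c s = (- ln s) powr (- c)"

lemma Phi_nonneg: "Phi c s \<ge> 0" unfolding Phi_def by simp

lemma Phi_pos: "0 < s \<Longrightarrow> s < 1 \<Longrightarrow> Phi c s > 0" unfolding Phi_def by simp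

lemma Phi_mono: assumes "c \<ge> 0" "0 < s" "s \<le> t" "t < 1" shows "Phi c s \<le> Phi c t"
  unfolding Phi_def by (rule powr_mono2') (use assms in auto)

lemma Phi_exp_mono: assumes "c \<le> c'" "0 < s" "s \<le> exp (-1)" shows "Phi c' s \<le> Phi c s"
proof -
  have "ln s \<le> ln (exp (-1))" using assms by (subst ln_le_cancel_iff) auto
  then have "1 \<le> - ln s" by simp
  then show ?thesis unfolding Phi_def by (intro powr_mono) (use assms in auto)
qed

lemma Phi_double:
  assumes c: "c \<ge> 0" and d: "0 < d" "d \<le> 1/4"
  shows "Phi c (2 * d) \<le> 2 powr c * Phi c d"
proof -
  have "ln d \<le> ln (1/4)" using d by (subst ln_le_cancel_iff) auto
  also have "ln (1/4::real) = - 2 * ln 2"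
  proof -
    have "ln (1/4::real) = ln 1 - ln 4" by (rule ln_divide_pos) auto
    moreover have "ln (4::real) = ln 2 + ln 2" using ln_mult_pos[of 2 2] by simp
    ultimately show ?thesis by simp
  qed
  finally have l0: "ln d \<le> - 2 * ln 2" .
  have "ln (2 * d) = ln 2 + ln d" using d by (intro ln_mult_pos) auto
  then have l: "(- ln d) / 2 \<le> - ln (2 * d)" using l0 by simp
  have p: "0 < (- ln d) / 2" using d by simp
  have "Phi c (2 * d) \<le> ((- ln d) / 2) powr (- c)"
    unfolding Phi_def by (rule powr_mono2'[OF _ p l]) (use c in simp)
  also have "\<dots> = (- ln d) powr (- c) / 2 powr (- c)" by (rule powr_divide)
  also have "\<dots> = (- ln d) powr (- c) / inverse (2 powr c)" by (simp only: powr_minus[of 2 c])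
  also have "\<dots> = (- ln d) powr (- c) * 2 powr c" by (simp add: divide_inverse)
  finally show ?thesis unfolding Phi_def by (simp add: mult.commute)
qed

lemma LNB: fixes t \<gamma> :: real assumes g: "\<gamma> > 0" and t: "t \<ge> 1" shows "1 + ln t \<le> (1 + \<gamma>) * t powr (1 / \<gamma>)"
proof -
  have tp: "t powr (1/\<gamma>) \<ge> 1" using t g ge_one_powr_ge_zero[of t "1/\<gamma>"] by simp
  have "ln (t powr (1/\<gamma>)) \<le> t powr (1/\<gamma>) - 1" using t by (intro ln_le_minus_one) auto
  then have "ln t / \<gamma> \<le> t powr (1/\<gamma>) - 1" using t by (simp add: ln_powr)
  then have "ln t \<le> \<gamma> * (t powr (1/\<gamma>) - 1)" using g by (simp add: divide_le_eq mult.commute)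
  then show ?thesis using tp g by (simp add: algebra_simps)
qed

lemma Phi_inv: "Phi c s = inverse ((- ln s) powr c)" unfolding Phi_def by (simp add: powr_minus)

lemma Phi_N3:
  assumes g: "\<gamma> > 0" and d: "0 < d" "d \<le> a" "a \<le> exp (-1)"
  shows "Phi \<gamma> a * (d / a) \<le> (1 + \<gamma>) powr \<gamma> * Phi \<gamma> d"
proof -
  define l where "l = - ln a"
  define t where "t = a / d"
  have a: "a > 0" using d by simp
  have "ln a \<le> ln (exp (-1))" using d a by (subst ln_le_cancel_iff) auto
  then have l1: "l \<ge> 1" unfolding l_def by simp
  have t1: "t \<ge> 1" unfolding t_def using d by simp
  have lnt: "ln t \<ge> 0" using t1 by simp
  have ld: "- ln d = l + ln t" unfolding l_def t_def using a d by (simp add: ln_divide_pos)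
  have "l + ln t \<le> l * (1 + ln t)" 
  proof -
    have "ln t \<le> l * ln t" using l1 lnt by (simp add: mult_le_cancel_right1)
    then show ?thesis by (simp add: algebra_simps)
  qed
  also have "\<dots> \<le> l * ((1 + \<gamma>) * t powr (1 / \<gamma>))" using LNB[OF g t1] l1 by (intro mult_left_mono) auto
  finally have A: "l + ln t \<le> l * ((1 + \<gamma>) * t powr (1 / \<gamma>))" .
  have pos: "0 < l + ln t" using l1 lnt by simp
  have B: "(l + ln t) powr \<gamma> \<le> (l * ((1 + \<gamma>) * t powr (1 / \<gamma>))) powr \<gamma>"
    using A pos g by (intro powr_mono2) auto
  also have "\<dots> = l powr \<gamma> * (1 + \<gamma>) powr \<gamma> * t"
    using g t1 by (simp add: powr_mult powr_powr)
  finally have C: "(l + ln t) powr \<gamma> \<le> l powr \<gamma> * (1 + \<gamma>) powr \<gamma> * t" .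
  have lp: "l powr \<gamma> > 0" using l1 by simp
  have gp: "(1 + \<gamma>) powr \<gamma> > 0" using g by simp
  have pp: "(l + ln t) powr \<gamma> > 0" using pos by simp
  have "Phi \<gamma> a * (d / a) = inverse (l powr \<gamma> * t)"
    unfolding Phi_inv l_def t_def using a d by (simp add: field_simps)
  also have "\<dots> \<le> (1 + \<gamma>) powr \<gamma> * inverse ((l + ln t) powr \<gamma>)"
  proof -
    have "inverse (l powr \<gamma> * t) = (1 + \<gamma>) powr \<gamma> / (l powr \<gamma> * (1 + \<gamma>) powr \<gamma> * t)"
      using lp gp t1 by (simp add: field_simps)
    also have "\<dots> \<le> (1 + \<gamma>) powr \<gamma> / (l + ln t) powr \<gamma>"
      using C pp gp lp t1 by (intro divide_left_mono) (auto intro!: mult_pos_pos)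
    finally show ?thesis by (simp add: divide_inverse)
  qed
  also have "\<dots> = (1 + \<gamma>) powr \<gamma> * Phi \<gamma> d" unfolding Phi_inv ld ..
  finally show ?thesis .
qed

lemma Phi_far:
  assumes g: "\<gamma> > 0" and d: "0 < d" "d < 1"
  shows "d \<le> (1 + \<gamma>) powr \<gamma> * Phi \<gamma> d"
proof -
  define t where "t = 1 / d"
  have t1: "t > 1" unfolding t_def using d by simp
  have lnt: "ln t > 0" using t1 by simp
  have ld: "- ln d = ln t" unfolding t_def using d by (simp add: ln_divide_pos)
  have "ln t \<le> (1 + \<gamma>) * t powr (1 / \<gamma>)" using LNB[OF g, of t] t1 by simp
  then have "(ln t) powr \<gamma> \<le> ((1 + \<gamma>) * t powr (1 / \<gamma>)) powr \<gamma>"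
    using lnt g by (intro powr_mono2) auto
  also have "\<dots> = (1 + \<gamma>) powr \<gamma> * t" using g t1 by (simp add: powr_mult powr_powr)
  finally have C: "(ln t) powr \<gamma> \<le> (1 + \<gamma>) powr \<gamma> * t" .
  have pp: "(ln t) powr \<gamma> > 0" using lnt by simp
  have gp: "(1 + \<gamma>) powr \<gamma> > 0" using g by simp
  have "d = (1 + \<gamma>) powr \<gamma> / ((1 + \<gamma>) powr \<gamma> * t)" unfolding t_def using d gp by simp
  also have "\<dots> \<le> (1 + \<gamma>) powr \<gamma> / (ln t) powr \<gamma>" using C pp gp t1 by (intro divide_left_mono) (auto intro!: mult_pos_pos)
  also have "\<dots> = (1 + \<gamma>) powr \<gamma> * Phi \<gamma> d" unfolding Phi_inv ld by (simp add: divide_inverse)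
  finally show ?thesis .
qed

lemma Phi_mvt:
  assumes c: "c > 0" and ab: "0 < b" "b \<le> a" "a \<le> exp (-1)" "a \<le> 2 * b"
  shows "\<bar>Phi c a - Phi c b\<bar> \<le> 2 * c * Phi c a * (a - b) / a"
proof (cases "b = a")
  case True then show ?thesis by simp
next
  case False
  then have ba: "b < a" using ab by simp
  have e1: "exp (-1::real) < 1" by simp
  define D where "D s = (- c) * (- ln s) powr (- c - 1) * (- inverse s)" for s
  have der: "DERIV (Phi c) s :> D s" if "b \<le> s" "s \<le> a" for s
  proof -
    have s: "0 < s" "s < 1" using that ab e1 by linarith+
    have "DERIV (\<lambda>s. - ln s) s :> - inverse s" using s by (auto intro!: derivative_eq_intros simp: divide_inverse)
    from DERIV_fun_powr[OF this, of "- c"] s show ?thesis unfolding Phi_def[abs_def] D_def by simp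
  qed
  obtain z where z: "b < z" "z < a" "Phi c a - Phi c b = (a - b) * D z"
    using MVT2[OF ba, of "Phi c" D] der by auto
  have zs: "0 < z" "z < 1" using z ab e1 by linarith+
  have "ln z \<le> ln (exp (-1))" using zs z ab by (subst ln_le_cancel_iff) auto
  then have lz: "1 \<le> - ln z" by simp
  have ee: "(- ln z) powr (- c - 1) = (- ln z) powr (-(c+1))"
    by (rule arg_cong[where f="\<lambda>y. (- ln z) powr y"]) simp
  have Dz: "D z = c * (Phi (c + 1) z / z)" unfolding D_def Phi_def ee using zs by (simp add: field_simps)
  have "Phi (c + 1) z \<le> Phi c z" using zs z ab by (intro Phi_exp_mono) auto
  also have "\<dots> \<le> Phi c a"
  proof (rule Phi_mono)
    show "a < 1" using ab e1 by linarith
  qed (use zs z c in auto)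
  finally have P: "Phi (c + 1) z \<le> Phi c a" .
  have "Phi (c + 1) z / z \<le> Phi c a / z" using P zs by (simp add: divide_right_mono)
  also have "\<dots> \<le> Phi c a / (a / 2)" using z ab Phi_nonneg[of c a] by (intro divide_left_mono) auto
  finally have Q: "Phi (c + 1) z / z \<le> 2 * Phi c a / a" by (simp add: mult.commute)
  have D0: "0 \<le> D z" unfolding Dz using c zs Phi_nonneg by simp
  have "\<bar>Phi c a - Phi c b\<bar> = (a - b) * D z" using z D0 ba by simp
  also have "\<dots> \<le> (a - b) * (c * (2 * Phi c a / a))" unfolding Dz
    using Q c ba by (intro mult_left_mono) auto
  finally show ?thesis by (simp add: field_simps)
qed

lemma norm_at0: "filterlim norm (at_right 0) (at (0::'a::real_normed_vector))"
  unfolding filterlim_at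
  by (auto simp: eventually_at_filter intro!: tendsto_norm_zero tendsto_ident_at)

lemma Phi_lim: "c > 0 \<Longrightarrow> ((\<lambda>z. Phi c (norm z)) \<longlongrightarrow> 0) (at (0::'a::real_normed_vector))"
proof -
  assume c: "c > 0"
  have "LIM z at (0::'a). ln (norm z) :> at_bot" by (rule filterlim_compose[OF ln_at_0 norm_at0])
  then have "LIM z at (0::'a). - ln (norm z) :> at_top" using filterlim_uminus_at_bot[THEN iffD1] by blast
  from tendsto_neg_powr[OF _ this, of "-c"] c show ?thesis unfolding Phi_def by simp
qed


lemma ssum_Alg: "ssum \<in> Alg \<zeta>"
  unfolding ssum_def[abs_def] by (intro Alg_sum Alg.coord finite)

lemma ssum_scale: "ssum (c *\<^sub>R x) = c * ssum x"
  unfolding ssum_def by (simp add: sum_distrib_left)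

lemma PP_scale: "PP (c *\<^sub>R x) = c^2 * PP x"
  unfolding PP_eq ssum_scale by (simp add: power_mult_distrib algebra_simps)

definition Kann :: "(real^'n::finite) set" where "Kann = {z. 1/4 \<le> norm z \<and> norm z \<le> 3/4}"

lemma Kann_compact: "compact (Kann :: (real^'n::finite) set)"
proof -
  have "(Kann :: (real^'n) set) = cball 0 (3/4) \<inter> - ball 0 (1/4)" unfolding Kann_def by (auto simp: not_less)
  moreover have "compact (cball (0::real^'n) (3/4) \<inter> - ball 0 (1/4))"
    by (rule compact_Int_closed) auto
  ultimately show ?thesis by simp
qed

lemma Kann_U0: "Kann \<subseteq> U0" unfolding Kann_def by (auto simp: U0_iff)

context ctx begin

lemma H1_Alg: "H1 i \<in> Alg \<zeta>"
proof -
  have "H1 i = (\<lambda>x. \<alpha> * ((PP x * inverse (norm x ^ 2) + 4 * (x$i * (ssum x + (-1) * x$i)) * inverse (norm x ^ 2))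
             + (-2) * (x$i * x$i) * PP x * (inverse (norm x ^ 2) * inverse (norm x ^ 2))))"
    by (rule ext) (simp add: H1_def power2_eq_square algebra_simps)
  also have "\<dots> \<in> Alg \<zeta>"
    by (intro Alg.mul Alg.add Alg.const Alg.coord Alg.invN PP_Alg ssum_Alg)
  finally show ?thesis .
qed

lemma H2_Alg: "H2 i \<in> Alg \<zeta>"
proof -
  have "H2 i = (\<lambda>x. (\<alpha> * (\<alpha> + 1)) * ((x$i * x$i) * PP x * (inverse (norm x ^ 2) * inverse (norm x ^ 2))))"
    by (rule ext) (simp add: H2_def power2_eq_square algebra_simps)
  also have "\<dots> \<in> Alg \<zeta>"
    by (intro Alg.mul Alg.add Alg.const Alg.coord Alg.invN PP_Alg ssum_Alg)
  finally show ?thesis .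
qed

lemma H1_hom: "c > 0 \<Longrightarrow> H1 i (c *\<^sub>R x) = H1 i x"
  by (cases "x = 0") (simp_all add: H1_def PP_scale ssum_scale power_mult_distrib power2_eq_square field_simps)

lemma H2_hom: "c > 0 \<Longrightarrow> H2 i (c *\<^sub>R x) = H2 i x"
  by (cases "x = 0") (simp_all add: H2_def PP_scale power_mult_distrib power2_eq_square field_simps)

end

lemma dist_scale: "c \<ge> 0 \<Longrightarrow> dist (c *\<^sub>R x) (c *\<^sub>R y) = c * dist x y"
  for x y :: "'a::real_normed_vector"
  by (simp add: dist_norm scaleR_diff_right[symmetric])

lemma H_generic:
  fixes H :: "real^'n::finite \<Rightarrow> real"
  assumes S: "SM U0 H" and hom: "\<And>c x. c > 0 \<Longrightarrow> H (c *\<^sub>R x) = H x"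
  shows "\<exists>B\<ge>0. (\<forall>x. x \<noteq> 0 \<longrightarrow> \<bar>H x\<bar> \<le> B) \<and>
           (\<forall>x y. x \<noteq> 0 \<longrightarrow> 2 * dist x y \<le> norm x \<longrightarrow> \<bar>H x - H y\<bar> \<le> B * (dist x y / norm x))"
proof -
  obtain B0 where B0: "B0 \<ge> 0" "\<And>z. z \<in> Kann \<Longrightarrow> \<bar>H z\<bar> \<le> B0"
    "\<And>z k. z \<in> Kann \<Longrightarrow> has_partial k H z \<and> \<bar>partial k H z\<bar> \<le> B0"
    using GB[OF S Kann_compact Kann_U0, of "[]"] by auto
  define B where "B = real CARD('n) * B0 + B0"
  have B: "B \<ge> 0" "B0 \<le> B" "real CARD('n) * B0 \<le> B" unfolding B_def using B0(1) by auto
  have scl: "H x = H ((1 / (2 * norm x)) *\<^sub>R x)" "norm ((1 / (2 * norm x)) *\<^sub>R x) = 1/2" if "x \<noteq> 0" for x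
    using hom[of "1 / (2 * norm x)" x] that by auto
  have bnd: "\<bar>H x\<bar> \<le> B" if "x \<noteq> 0" for x
  proof -
    have "(1 / (2 * norm x)) *\<^sub>R x \<in> Kann" using scl(2)[OF that] unfolding Kann_def by simp
    then show ?thesis using B0(2) B scl(1)[OF that] by fastforce
  qed
  have lip: "\<bar>H x - H y\<bar> \<le> B * (dist x y / norm x)" if x: "x \<noteq> 0" and d: "2 * dist x y \<le> norm x" for x y
  proof -
    define l where "l = 1 / (2 * norm x)"
    have l: "l > 0" unfolding l_def using x by simp
    define x' where "x' = l *\<^sub>R x"
    define y' where "y' = l *\<^sub>R y"
    have nx': "norm x' = 1/2" unfolding x'_def l_def using x by simp
    have dd: "dist x' y' = l * dist x y" unfolding x'_def y'_def using l by (simp add: dist_scale)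
    have dd2: "dist x' y' \<le> 1/4" unfolding dd l_def using x d by (simp add: field_simps)
    have "cball x' (dist x' y') \<subseteq> Kann"
    proof
      fix z assume "z \<in> cball x' (dist x' y')"
      then have "dist x' z \<le> 1/4" using dd2 by simp
      moreover have "norm x' \<le> norm z + dist x' z" "norm z \<le> norm x' + dist x' z"
        using norm_triangle_ineq[of z "x' - z"] norm_triangle_ineq[of x' "z - x'"]
        by (auto simp: dist_norm norm_minus_commute)
      ultimately show "z \<in> Kann" unfolding Kann_def using nx' by auto
    qed
    then have "\<bar>H y' - H x'\<bar> \<le> real CARD('n) * B0 * dist x' y'"
      using B0(3) B0(1) by (intro LIP) auto
    also have "\<dots> \<le> B * dist x' y'" using B(3) by (intro mult_right_mono) auto
    also have "\<dots> = B * (dist x y / (2 * norm x))" unfolding dd l_def by simp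
    also have "\<dots> \<le> B * (dist x y / norm x)" using B x by (intro mult_left_mono) (auto simp: field_simps)
    finally show ?thesis using hom[OF l, of x] hom[OF l, of y] unfolding x'_def y'_def
      by (simp add: abs_minus_commute)
  qed
  show ?thesis using B bnd lip by blast
qed

lemma term_est:
  fixes c a b d B h1 h2 :: real
  assumes c: "c > 0" and ab: "0 < b" "b \<le> a" "a \<le> exp (-1)" "a \<le> 2 * b" "a - b \<le> d"
    and B: "B \<ge> 0" "\<bar>h1\<bar> \<le> B" "\<bar>h1 - h2\<bar> \<le> B * (d / a)"
  shows "\<bar>Phi c a * h1 - Phi c b * h2\<bar> \<le> (2 * c + 1) * B * (Phi c a * (d / a))"
proof -
  let ?P = "Phi c a" let ?Q = "Phi c b" let ?r = "d / a"
  have a: "a > 0" using ab by simp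
  have e1: "exp (-1::real) < 1" by simp
  have P0: "?P \<ge> 0" "?Q \<ge> 0" by (simp_all add: Phi_nonneg)
  have QP: "?Q \<le> ?P" using ab c e1 by (intro Phi_mono) linarith+
  have PQ: "\<bar>?P - ?Q\<bar> \<le> 2 * c * ?P * (a - b) / a" by (rule Phi_mvt[OF c ab(1-4)])
  also have "\<dots> \<le> 2 * c * ?P * ?r"
    using ab(5) a c P0 by (simp add: divide_right_mono mult_left_mono)
  finally have PQ': "\<bar>?P - ?Q\<bar> \<le> 2 * c * ?P * ?r" .
  have r0: "?r \<ge> 0" using ab a by simp
  have "?P * h1 - ?Q * h2 = (?P - ?Q) * h1 + ?Q * (h1 - h2)" by (simp add: algebra_simps)
  then have "\<bar>?P * h1 - ?Q * h2\<bar> \<le> \<bar>?P - ?Q\<bar> * \<bar>h1\<bar> + ?Q * \<bar>h1 - h2\<bar>"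
    using P0 by (simp add: abs_mult abs_triangle_ineq[THEN order_trans])
  also have "\<dots> \<le> (2 * c * ?P * ?r) * B + ?P * (B * ?r)"
    using PQ' B P0 QP by (intro add_mono mult_mono) auto
  also have "\<dots> = (2 * c + 1) * B * (?P * ?r)" by (simp add: algebra_simps)
  finally show ?thesis .
qed

context ctx begin

lemma F_Phi: "F i x = Phi (\<alpha> + 1) (norm x) * H1 i x + Phi (\<alpha> + 2) (norm x) * H2 i x"
proof -
  have "-\<alpha>-1 = -(\<alpha>+1)" "-\<alpha>-2 = -(\<alpha>+2)" by simp_all
  then show ?thesis unfolding F_def Phi_def Lf_def by simp
qed

lemma H_est:
  "\<exists>B\<ge>0. (\<forall>x. x \<noteq> 0 \<longrightarrow> \<bar>H1 i x\<bar> \<le> B \<and> \<bar>H2 i x\<bar> \<le> B) \<and>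
      (\<forall>x y. x \<noteq> 0 \<longrightarrow> 2 * dist x y \<le> norm x \<longrightarrow>
          \<bar>H1 i x - H1 i y\<bar> \<le> B * (dist x y / norm x) \<and> \<bar>H2 i x - H2 i y\<bar> \<le> B * (dist x y / norm x))"
proof -
  obtain B1 where B1: "B1 \<ge> 0" "\<forall>x. x \<noteq> 0 \<longrightarrow> \<bar>H1 i x\<bar> \<le> B1"
     "\<forall>x y. x \<noteq> 0 \<longrightarrow> 2 * dist x y \<le> norm x \<longrightarrow> \<bar>H1 i x - H1 i y\<bar> \<le> B1 * (dist x y / norm x)"
    using H_generic[OF Alg_SM[OF sm H1_Alg] H1_hom] by blast
  obtain B2 where B2: "B2 \<ge> 0" "\<forall>x. x \<noteq> 0 \<longrightarrow> \<bar>H2 i x\<bar> \<le> B2"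
     "\<forall>x y. x \<noteq> 0 \<longrightarrow> 2 * dist x y \<le> norm x \<longrightarrow> \<bar>H2 i x - H2 i y\<bar> \<le> B2 * (dist x y / norm x)"
    using H_generic[OF Alg_SM[OF sm H2_Alg] H2_hom] by blast
  have r: "B1 * t \<le> (B1 + B2) * t" "B2 * t \<le> (B1 + B2) * t" if "t \<ge> 0" for t
    using that B1(1) B2(1) by (simp_all add: mult_right_mono)
  show ?thesis
    apply (rule exI[of _ "B1 + B2"])
    using B1 B2 r by (smt (verit) divide_nonneg_nonneg zero_le_dist norm_ge_zero)
qed

end

context ctx begin

lemma near_est:
  "\<exists>Kn\<ge>0. \<forall>x y. norm x < rho \<longrightarrow> norm y < rho \<longrightarrow> 0 < dist x y \<longrightarrow> dist x y \<le> 1/4 \<longrightarrow>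
      \<bar>partials [i, i] u x - partials [i, i] u y\<bar> \<le> Kn * Phi (\<alpha> + 1) (dist x y)"
proof -
  obtain B where B: "B \<ge> 0" "\<And>x. x \<noteq> 0 \<Longrightarrow> \<bar>H1 i x\<bar> \<le> B \<and> \<bar>H2 i x\<bar> \<le> B"
      "\<And>x y. x \<noteq> 0 \<Longrightarrow> 2 * dist x y \<le> norm x \<Longrightarrow>
          \<bar>H1 i x - H1 i y\<bar> \<le> B * (dist x y / norm x) \<and> \<bar>H2 i x - H2 i y\<bar> \<le> B * (dist x y / norm x)"
    using H_est[of i] by blast
  define \<gamma> where "\<gamma> = \<alpha> + 1"
  have g: "\<gamma> > 0" unfolding \<gamma>_def using alpha by simp
  define f where "f = partials [i, i] u"
  define Kn where "Kn = 4 * B * 2 powr \<gamma> + (4 * \<gamma> + 4) * B * (1 + \<gamma>) powr \<gamma>"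
  have Kn0: "Kn \<ge> 0" unfolding Kn_def using B(1) g by simp
  have re: "rho \<le> exp (-1)" "rho < 1" using rho by auto
  have fb: "\<bar>f z\<bar> \<le> 2 * B * Phi \<gamma> (norm z)" if z: "z \<noteq> 0" "norm z < rho" for z
  proof -
    have fe: "f z = Phi \<gamma> (norm z) * H1 i z + Phi (\<gamma> + 1) (norm z) * H2 i z"
      unfolding f_def E3'[OF z] F_Phi \<gamma>_def by (simp add: add.assoc)
    have pq: "Phi (\<gamma> + 1) (norm z) \<le> Phi \<gamma> (norm z)" using z re by (intro Phi_exp_mono) auto
    let ?P = "Phi \<gamma> (norm z)" let ?Q = "Phi (\<gamma> + 1) (norm z)"
    have P0: "?P \<ge> 0" "?Q \<ge> 0" by (simp_all add: Phi_nonneg)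
    have "\<bar>f z\<bar> \<le> \<bar>?P * H1 i z\<bar> + \<bar>?Q * H2 i z\<bar>" using fe by simp
    also have "\<dots> = ?P * \<bar>H1 i z\<bar> + ?Q * \<bar>H2 i z\<bar>" using P0 by (simp add: abs_mult)
    also have "\<dots> \<le> ?P * B + ?P * B"
      using B(2)[OF z(1)] P0 pq B(1) by (intro add_mono mult_mono) auto
    finally show ?thesis by simp
  qed
  have fb2: "\<bar>f z\<bar> \<le> 2 * B * 2 powr \<gamma> * Phi \<gamma> d" if z: "norm z \<le> 2 * d" "norm z < rho" and d: "0 < d" "d \<le> 1/4" for z d
  proof (cases "z = 0")
    case True then show ?thesis using E5'[of i] B(1) Phi_nonneg[of \<gamma> d] unfolding f_def by simp
  next
    case False
    have "\<bar>f z\<bar> \<le> 2 * B * Phi \<gamma> (norm z)" using fb[OF False z(2)] .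
    also have "\<dots> \<le> 2 * B * Phi \<gamma> (2 * d)" using False z d B(1) g
      by (intro mult_left_mono Phi_mono) auto
    also have "\<dots> \<le> 2 * B * (2 powr \<gamma> * Phi \<gamma> d)" using B(1) g d
      by (intro mult_left_mono Phi_double) auto
    finally show ?thesis by (simp add: mult.assoc)
  qed
  have ord: "\<bar>f x - f y\<bar> \<le> Kn * Phi \<gamma> (dist x y)"
    if xy: "norm y \<le> norm x" "norm x < rho" "0 < dist x y" "dist x y \<le> 1/4" for x y
  proof -
    let ?d = "dist x y" let ?a = "norm x" let ?b = "norm y"
    have tri: "?a \<le> ?b + ?d" "?b \<le> ?a + ?d"
      using norm_triangle_ineq[of y "x - y"] norm_triangle_ineq[of x "y - x"]
      by (auto simp: dist_norm norm_minus_commute)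
    show ?thesis
    proof (cases "?a \<le> 2 * ?d")
      case True
      have "\<bar>f x - f y\<bar> \<le> \<bar>f x\<bar> + \<bar>f y\<bar>" by simp
      also have "\<dots> \<le> 2 * B * 2 powr \<gamma> * Phi \<gamma> ?d + 2 * B * 2 powr \<gamma> * Phi \<gamma> ?d"
        using True xy by (intro add_mono fb2) auto
      also have "\<dots> \<le> Kn * Phi \<gamma> ?d" unfolding Kn_def
        using B(1) g Phi_nonneg[of \<gamma> ?d] by (simp add: algebra_simps)
      finally show ?thesis .
    next
      case False
      have a0: "?a > 0" using False xy(3) by linarith
      have x0: "x \<noteq> 0" using a0 by auto
      have b2: "?a \<le> 2 * ?b" using False tri by linarith
      have b0: "?b > 0" using b2 a0 by linarith
      have y0: "y \<noteq> 0" using b0 by auto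
      have ad: "2 * ?d \<le> ?a" using False by linarith
      have ae: "?a \<le> exp (-1)" using xy re by simp
      have abd: "?a - ?b \<le> ?d" using tri by linarith
      have e: "f x - f y = (Phi \<gamma> ?a * H1 i x - Phi \<gamma> ?b * H1 i y) + (Phi (\<gamma>+1) ?a * H2 i x - Phi (\<gamma>+1) ?b * H2 i y)"
        unfolding f_def E3'[OF x0 xy(2)] E3'[OF y0 le_less_trans[OF xy(1) xy(2)]] F_Phi \<gamma>_def
        by (simp add: add.assoc)
      have t1: "\<bar>Phi \<gamma> ?a * H1 i x - Phi \<gamma> ?b * H1 i y\<bar> \<le> (2 * \<gamma> + 1) * B * (Phi \<gamma> ?a * (?d / ?a))"
        using B(2)[OF x0] B(3)[OF x0 ad] by (intro term_est g b0 xy(1) ae b2 abd B(1)) auto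
      have t2: "\<bar>Phi (\<gamma>+1) ?a * H2 i x - Phi (\<gamma>+1) ?b * H2 i y\<bar> \<le> (2 * (\<gamma>+1) + 1) * B * (Phi (\<gamma>+1) ?a * (?d / ?a))"
        using B(2)[OF x0] B(3)[OF x0 ad] g by (intro term_est b0 xy(1) ae b2 abd B(1)) auto
      have pp: "Phi (\<gamma>+1) ?a \<le> Phi \<gamma> ?a" using a0 ae by (intro Phi_exp_mono) auto
      have r0: "?d / ?a \<ge> 0" using a0 by simp
      have t2': "(2 * (\<gamma>+1) + 1) * B * (Phi (\<gamma>+1) ?a * (?d / ?a)) \<le> (2 * (\<gamma>+1) + 1) * B * (Phi \<gamma> ?a * (?d / ?a))"
        using pp r0 B(1) g by (intro mult_left_mono mult_right_mono) auto
      have "\<bar>f x - f y\<bar> \<le> (2 * \<gamma> + 1) * B * (Phi \<gamma> ?a * (?d / ?a)) + (2 * (\<gamma>+1) + 1) * B * (Phi \<gamma> ?a * (?d / ?a))"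
        unfolding e using t1 t2 t2' by linarith
      also have "\<dots> = (4 * \<gamma> + 4) * B * (Phi \<gamma> ?a * (?d / ?a))"
      proof -
        have eqn: "\<And>X. (2 * \<gamma> + 1) * B * X + (2 * (\<gamma>+1) + 1) * B * X = (4 * \<gamma> + 4) * B * X"
          by (simp add: algebra_simps)
        show ?thesis by (rule eqn)
      qed
      also have "\<dots> \<le> (4 * \<gamma> + 4) * B * ((1 + \<gamma>) powr \<gamma> * Phi \<gamma> ?d)"
      proof -
        have da: "?d \<le> ?a" using ad xy(3) by linarith
        show ?thesis using B(1) g xy ad ae da by (intro mult_left_mono Phi_N3) auto
      qed
      also have "\<dots> \<le> Kn * Phi \<gamma> ?d" unfolding Kn_def
        using B(1) g Phi_nonneg[of \<gamma> ?d] by (simp add: algebra_simps)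
      finally show ?thesis .
    qed
  qed
  have "\<bar>f x - f y\<bar> \<le> Kn * Phi \<gamma> (dist x y)"
    if "norm x < rho" "norm y < rho" "0 < dist x y" "dist x y \<le> 1/4" for x y
  proof (cases "norm y \<le> norm x")
    case True then show ?thesis using ord that by blast
  next
    case False
    then have "\<bar>f y - f x\<bar> \<le> Kn * Phi \<gamma> (dist y x)" using ord that by (simp add: dist_commute)
    then show ?thesis by (simp add: dist_commute abs_minus_commute)
  qed
  then show ?thesis using Kn0 unfolding f_def \<gamma>_def by blast
qed

end

lemma D0_sum:
  assumes "finite S" "\<And>i. i \<in> S \<Longrightarrow> D0 a \<Omega> (f i)"
  shows "D0 a \<Omega> (\<lambda>x. \<Sum>i\<in>S. f i x)"
  using assms
proof (induction S rule: finite_induct)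
  case empty
  show ?case unfolding D0_def by (auto intro!: exI[of _ 0])
next
  case (insert j S)
  have A: "D0 a \<Omega> (f j)" using insert by auto
  have B: "D0 a \<Omega> (\<lambda>x. \<Sum>i\<in>S. f i x)" using insert by auto
  obtain C1 where C1: "\<forall>x\<in>closure \<Omega>. \<forall>y\<in>closure \<Omega>. 0 < dist x y \<and> dist x y < 1 \<longrightarrow>
         \<bar>f j x - f j y\<bar> \<le> C1 * (- ln (dist x y)) powr (- a)" using A unfolding D0_def by blast
  obtain C2 where C2: "\<forall>x\<in>closure \<Omega>. \<forall>y\<in>closure \<Omega>. 0 < dist x y \<and> dist x y < 1 \<longrightarrow>
         \<bar>(\<Sum>i\<in>S. f i x) - (\<Sum>i\<in>S. f i y)\<bar> \<le> C2 * (- ln (dist x y)) powr (- a)" using B unfolding D0_def by blast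
  have "continuous_on (closure \<Omega>) (\<lambda>x. f j x + (\<Sum>i\<in>S. f i x))"
    using A B unfolding D0_def by (intro continuous_on_add) auto
  moreover have "\<forall>x\<in>closure \<Omega>. \<forall>y\<in>closure \<Omega>. 0 < dist x y \<and> dist x y < 1 \<longrightarrow>
         \<bar>(f j x + (\<Sum>i\<in>S. f i x)) - (f j y + (\<Sum>i\<in>S. f i y))\<bar> \<le> (C1 + C2) * (- ln (dist x y)) powr (- a)"
  proof (intro ballI impI)
    fix x y assume xy: "x \<in> closure \<Omega>" "y \<in> closure \<Omega>" "0 < dist x y \<and> dist x y < 1"
    have "\<bar>(f j x + (\<Sum>i\<in>S. f i x)) - (f j y + (\<Sum>i\<in>S. f i y))\<bar>
        \<le> \<bar>f j x - f j y\<bar> + \<bar>(\<Sum>i\<in>S. f i x) - (\<Sum>i\<in>S. f i y)\<bar>" by linarith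
    also have "\<dots> \<le> C1 * (- ln (dist x y)) powr (- a) + C2 * (- ln (dist x y)) powr (- a)"
      using C1 C2 xy by (intro add_mono) auto
    finally show "\<bar>(f j x + (\<Sum>i\<in>S. f i x)) - (f j y + (\<Sum>i\<in>S. f i y))\<bar> \<le> (C1 + C2) * (- ln (dist x y)) powr (- a)"
      by (simp add: algebra_simps)
  qed
  ultimately show ?case using insert(1,2) unfolding D0_def by auto
qed

context ctx begin

lemma f_cont: "continuous (at x) (partials [i, i] u)"
proof (cases "x = 0")
  case False
  have "continuous_on (- {0}) (partials [i, i] u)" using SM_u unfolding SM_def by blast
  then show ?thesis using False by (simp add: continuous_on_eq_continuous_at open_Compl)
next
  case True
  obtain Kn where Kn: "Kn \<ge> 0" "\<And>x y. norm x < rho \<Longrightarrow> norm y < rho \<Longrightarrow> 0 < dist x y \<Longrightarrow> dist x y \<le> 1/4 \<Longrightarrow>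
      \<bar>partials [i, i] u x - partials [i, i] u y\<bar> \<le> Kn * Phi (\<alpha> + 1) (dist x y)"
    using near_est[of i] by blast
  have ev: "eventually (\<lambda>z. norm (partials [i, i] u z) \<le> Kn * Phi (\<alpha> + 1) (norm z)) (at 0)"
  proof -
    have "eventually (\<lambda>z::real^'n. z \<in> ball 0 (min rho (1/4))) (at 0)"
      by (rule eventually_at_in_open') (use rho in auto)
    moreover have "eventually (\<lambda>z::real^'n. z \<noteq> 0) (at 0)" by (simp add: eventually_at_filter)
    ultimately show ?thesis
    proof eventually_elim
      case (elim z)
      then show ?case using Kn(2)[of z 0] E5'[of i] rho by simp
    qed
  qed
  have "((\<lambda>z. Kn * Phi (\<alpha> + 1) (norm z)) \<longlongrightarrow> 0) (at (0::real^'n))"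
    using tendsto_mult_right_zero[OF Phi_lim[of "\<alpha>+1"], of Kn] alpha by simp
  from Lim_null_comparison[OF ev this] have "(partials [i, i] u \<longlongrightarrow> 0) (at 0)" .
  then show ?thesis using True E5'[of i] by (simp add: continuous_at)
qed

lemma D0_pos:
  assumes bd: "bounded \<Omega>"
  shows "D0 (\<alpha> + 1) \<Omega> (partials [i, i] u)"
proof -
  define f where "f = partials [i, i] u"
  define \<gamma> where "\<gamma> = \<alpha> + 1"
  have g: "\<gamma> > 0" unfolding \<gamma>_def using alpha by simp
  have cont: "continuous_on (closure \<Omega>) f" unfolding f_def
    using f_cont by (intro continuous_at_imp_continuous_on) auto
  have cpt: "compact (closure \<Omega>)" using bd by (simp add: compact_closure)
  obtain M where M: "\<And>z. z \<in> closure \<Omega> \<Longrightarrow> \<bar>f z\<bar> \<le> M" using bound_cont[OF cont cpt] by blast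
  obtain R where R: "\<And>z. z \<in> closure \<Omega> \<Longrightarrow> norm z \<le> R"
    using bounded_closure[OF bd] unfolding bounded_iff by blast
  define K where "K = {z::real^'n. rho/4 \<le> norm z \<and> norm z \<le> R + 1}"
  have "K = cball 0 (R + 1) \<inter> - ball 0 (rho/4)" unfolding K_def by (auto simp: not_less)
  moreover have "compact (cball (0::real^'n) (R + 1) \<inter> - ball 0 (rho/4))"
    by (rule compact_Int_closed) auto
  ultimately have cK: "compact K" by simp
  have KW: "K \<subseteq> - {0}" unfolding K_def using rho by auto
  obtain Bf where Bf: "Bf \<ge> 0" "\<And>z k. z \<in> K \<Longrightarrow> has_partial k f z \<and> \<bar>partial k f z\<bar> \<le> Bf"
    using GB[OF SM_u cK KW, of "[i, i]"] unfolding f_def by blast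
  obtain Kn where Kn: "Kn \<ge> 0" "\<And>x y. norm x < rho \<Longrightarrow> norm y < rho \<Longrightarrow> 0 < dist x y \<Longrightarrow> dist x y \<le> 1/4 \<Longrightarrow>
      \<bar>f x - f y\<bar> \<le> Kn * Phi \<gamma> (dist x y)"
    using near_est[of i] unfolding f_def \<gamma>_def by blast
  define \<delta> where "\<delta> = min (rho/4) (1/4)"
  have dl: "\<delta> > 0" "\<delta> < 1" "\<delta> \<le> rho/4" "\<delta> \<le> 1/4" unfolding \<delta>_def using rho by auto
  have Pd: "Phi \<gamma> \<delta> > 0" using dl by (intro Phi_pos) auto
  define C1 where "C1 = real CARD('n) * Bf * (1 + \<gamma>) powr \<gamma>"
  define C2 where "C2 = 2 * \<bar>M\<bar> / Phi \<gamma> \<delta>"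
  have C10: "C1 \<ge> 0" unfolding C1_def using Bf(1) g by simp
  have C20: "C2 \<ge> 0" unfolding C2_def using Pd by simp
  have est: "\<bar>f x - f y\<bar> \<le> (Kn + C1 + C2) * Phi \<gamma> (dist x y)"
    if xy: "x \<in> closure \<Omega>" "y \<in> closure \<Omega>" "0 < dist x y" "dist x y < 1" for x y
  proof -
    let ?d = "dist x y"
    have P0: "Phi \<gamma> ?d \<ge> 0" by (rule Phi_nonneg)
    have tri: "norm x \<le> norm y + ?d" "norm y \<le> norm x + ?d"
      using norm_triangle_ineq[of y "x - y"] norm_triangle_ineq[of x "y - x"]
      by (auto simp: dist_norm norm_minus_commute)
    have "\<bar>f x - f y\<bar> \<le> Kn * Phi \<gamma> ?d \<or> \<bar>f x - f y\<bar> \<le> C1 * Phi \<gamma> ?d \<or> \<bar>f x - f y\<bar> \<le> C2 * Phi \<gamma> ?d"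
    proof (cases "?d < \<delta>")
      case True
      show ?thesis
      proof (cases "norm x < rho/2 \<or> norm y < rho/2")
        case True
        then have "norm x < rho" "norm y < rho" using tri \<open>?d < \<delta>\<close> dl by auto
        then show ?thesis using Kn(2)[of x y] xy \<open>?d < \<delta>\<close> dl by auto
      next
        case False
        have "cball x ?d \<subseteq> K"
        proof
          fix z assume "z \<in> cball x ?d"
          then have dz: "dist x z \<le> ?d" by simp
          have "norm x \<le> norm z + dist x z" "norm z \<le> norm x + dist x z"
            using norm_triangle_ineq[of z "x - z"] norm_triangle_ineq[of x "z - x"]
            by (auto simp: dist_norm norm_minus_commute)
          then show "z \<in> K" unfolding K_def using False dz \<open>?d < \<delta>\<close> dl R[OF xy(1)] by auto
        qed
        then have "\<bar>f y - f x\<bar> \<le> real CARD('n) * Bf * ?d" using Bf by (intro LIP) auto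
        also have "\<dots> \<le> real CARD('n) * Bf * ((1 + \<gamma>) powr \<gamma> * Phi \<gamma> ?d)"
          using Bf(1) Phi_far[OF g xy(3,4)] by (intro mult_left_mono) auto
        finally have "\<bar>f x - f y\<bar> \<le> C1 * Phi \<gamma> ?d" unfolding C1_def by (simp add: abs_minus_commute mult.assoc)
        then show ?thesis by blast
      qed
    next
      case False
      have "\<bar>f x - f y\<bar> \<le> 2 * \<bar>M\<bar>" using M[OF xy(1)] M[OF xy(2)] by linarith
      also have "\<dots> = C2 * Phi \<gamma> \<delta>" unfolding C2_def using Pd by simp
      also have "\<dots> \<le> C2 * Phi \<gamma> ?d" using C20 False dl g xy by (intro mult_left_mono Phi_mono) auto
      finally show ?thesis by blast
    qed
    moreover have "Kn * Phi \<gamma> ?d \<le> (Kn + C1 + C2) * Phi \<gamma> ?d" "C1 * Phi \<gamma> ?d \<le> (Kn + C1 + C2) * Phi \<gamma> ?d"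
      "C2 * Phi \<gamma> ?d \<le> (Kn + C1 + C2) * Phi \<gamma> ?d"
      using Kn(1) C10 C20 P0 by (auto intro!: mult_right_mono)
    ultimately show ?thesis by linarith
  qed
  show ?thesis unfolding D0_def
  proof (intro conjI exI[of _ "Kn + C1 + C2"] ballI impI)
    show "continuous_on (closure \<Omega>) (partials [i, i] u)" using cont unfolding f_def .
    fix x y assume "x \<in> closure \<Omega>" "y \<in> closure \<Omega>" "0 < dist x y \<and> dist x y < 1"
    then show "\<bar>partials [i, i] u x - partials [i, i] u y\<bar> \<le> (Kn + C1 + C2) * (- ln (dist x y)) powr (- (\<alpha> + 1))"
      using est unfolding f_def Phi_def \<gamma>_def by blast
  qed
qed

end

context ctx begin

lemma neg_part:
  assumes ij: "i \<noteq> j" and b: "\<beta> > \<alpha>" and op: "open \<Omega>" and z: "0 \<in> \<Omega>"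
  shows "\<not> D0 \<beta> \<Omega> (partials [i, j] u)"
proof
  assume "D0 \<beta> \<Omega> (partials [i, j] u)"
  then obtain C where C: "\<And>x y. x\<in>closure \<Omega> \<Longrightarrow> y\<in>closure \<Omega> \<Longrightarrow> 0 < dist x y \<and> dist x y < 1 \<Longrightarrow>
      \<bar>partials [i, j] u x - partials [i, j] u y\<bar> \<le> C * (- ln (dist x y)) powr (- \<beta>)"
    unfolding D0_def by blast
  obtain e where e: "e > 0" "ball 0 e \<subseteq> \<Omega>" using op z open_contains_ball by blast
  define m where "m = min e rho"
  have m: "m > 0" "m \<le> e" "m \<le> rho" unfolding m_def using e rho by auto
  have key: "2 \<le> C * (- ln t) powr (\<alpha> - \<beta>)" if t: "0 < t" "t < m" for t
  proof -
    let ?x = "t *\<^sub>R axis i (1::real)"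
    have tr: "t < rho" "t < 1" using t m rho by auto
    have "?x \<in> ball 0 e" using t m by simp
    then have xin: "?x \<in> closure \<Omega>" using e closure_subset by blast
    have zin: "0 \<in> closure \<Omega>" using z closure_subset by auto
    have dx: "dist ?x 0 = t" using t by simp
    have fx: "partials [i, j] u ?x = 2 * (- ln t) powr (-\<alpha>) + 2 * \<alpha> * (- ln t) powr (-\<alpha>-1)"
      using hasp_partial[OF E7[OF ij t(1) tr(1)]] by simp
    have f0: "partials [i, j] u 0 = 0" using hasp_partial[OF E6h[OF ij]] by simp
    have L: "- ln t > 0" using t tr by simp
    have "2 * (- ln t) powr (-\<alpha>) \<le> partials [i, j] u ?x" unfolding fx using alpha L by simp
    also have "\<dots> \<le> C * (- ln t) powr (- \<beta>)" using C[OF xin zin] dx t tr f0 by force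
    finally have I: "2 * (- ln t) powr (-\<alpha>) \<le> C * (- ln t) powr (- \<beta>)" .
    have P: "(- ln t) powr \<alpha> > 0" using L by simp
    have "2 = 2 * (- ln t) powr (-\<alpha>) * (- ln t) powr \<alpha>" using L by (simp add: powr_minus)
    also have "\<dots> \<le> C * (- ln t) powr (- \<beta>) * (- ln t) powr \<alpha>" using I P by (intro mult_right_mono) auto
    also have "\<dots> = C * (- ln t) powr (\<alpha> - \<beta>)" by (simp add: mult.assoc powr_add[symmetric])
    finally show ?thesis .
  qed
  have "((\<lambda>M::real. M powr (\<alpha> - \<beta>)) \<longlongrightarrow> 0) at_top"
    using b by (intro tendsto_neg_powr filterlim_ident) auto
  then have "((\<lambda>M::real. C * M powr (\<alpha> - \<beta>)) \<longlongrightarrow> 0) at_top"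
    using tendsto_mult_right_zero by blast
  then have ev1: "eventually (\<lambda>M::real. C * M powr (\<alpha> - \<beta>) < 2) at_top"
    by (rule order_tendstoD) simp
  have ev2: "eventually (\<lambda>M::real. M > max 0 (- ln m)) at_top" by (rule eventually_gt_at_top)
  obtain M where M: "C * M powr (\<alpha> - \<beta>) < 2" "M > max 0 (- ln m)"
    using eventually_happens[OF eventually_conj[OF ev1 ev2]] by auto
  have t: "0 < exp (- M)" "exp (- M) < m"
  proof -
    show "0 < exp (- M)" by simp
    have "- M < ln m" using M by simp
    then have "exp (- M) < exp (ln m)" by simp
    then show "exp (- M) < m" using m by simp
  qed
  from key[OF t] M show False by simp
qed

end

theorem mainTheorem2:
  fixes \<Omega> :: "(real^'n) set" and lam \<alpha> :: real and \<zeta> u :: "real^'n \<Rightarrow> real"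
  assumes n2: "CARD('n) \<ge> 2"
    and dom: "admissible_domain lam \<Omega>"
    and alpha: "\<alpha> > 0"
    and zeta_smooth: "smooth_fun \<zeta>"
    and zeta_supp: "tsupp \<zeta> \<subseteq> ball 0 1"
    and zeta_one: "\<exists>r>0. \<forall>x\<in>ball 0 r. \<zeta> x = 1"
    and zero_in: "0 \<in> \<Omega>"
    and supp_in: "tsupp \<zeta> \<subseteq> \<Omega>"
    and u_def: "\<And>x. u x = (if x = 0 then 0 else
                 \<zeta> x * (- ln (norm x)) powr (- \<alpha>) * (\<Sum>i\<in>UNIV. \<Sum>j\<in>UNIV - {i}. x $ i * x $ j))"
  shows "(\<forall>x\<in>frontier \<Omega>. u x = 0)
       \<and> (\<forall>i j x. has_partial j u x \<and> has_partial i (partial j u) x)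
       \<and> (\<forall>i. D0 (\<alpha> + 1) \<Omega> (partials [i, i] u))
       \<and> D0 (\<alpha> + 1) \<Omega> (\<lambda>x. \<Sum>i\<in>UNIV. partials [i, i] u x)
       \<and> (\<forall>i j. i \<noteq> j \<longrightarrow> (\<forall>\<beta>>\<alpha>. \<not> D0 \<beta> \<Omega> (partials [i, j] u)))"
proof -
  interpret ctx \<zeta> u \<alpha>
    using alpha zeta_smooth zeta_supp zeta_one u_def by unfold_locales auto
  have op: "open \<Omega>" and bd: "bounded \<Omega>" using dom unfolding admissible_domain_def by auto
  have P1: "\<forall>x\<in>frontier \<Omega>. u x = 0"
  proof
    fix x assume "x \<in> frontier \<Omega>"
    then have "x \<notin> \<Omega>" using op by (simp add: frontier_def interior_open)
    then have "x \<notin> tsupp \<zeta>" using supp_in by blast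
    then show "u x = 0" using zeta_out by (simp add: u_eq)
  qed
  have P2: "has_partial j u x \<and> has_partial i (partial j u) x" for i j x
  proof (cases "x = 0")
    case False
    then have "x \<in> - {0}" by simp
    then have "has_partial j (partials [] u) x" "has_partial i (partials [j] u) x"
      using SM_u unfolding SM_def by blast+
    then show ?thesis by simp
  next
    case True
    have "has_partial i (partial j u) 0"
    proof (cases "i = j")
      case True then show ?thesis using hasp_partial[OF E5h[of i]] by simp
    next
      case False then show ?thesis using hasp_partial[OF E6h[OF False]] by simp
    qed
    then show ?thesis using True E4' by simp
  qed
  have P3: "\<forall>i. D0 (\<alpha> + 1) \<Omega> (partials [i, i] u)" using D0_pos[OF bd] by blast
  have P4: "D0 (\<alpha> + 1) \<Omega> (\<lambda>x. \<Sum>i\<in>UNIV. partials [i, i] u x)" using P3 by (intro D0_sum) auto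
  have P5: "\<forall>i j. i \<noteq> j \<longrightarrow> (\<forall>\<beta>>\<alpha>. \<not> D0 \<beta> \<Omega> (partials [i, j] u))"
    using neg_part[OF _ _ op zero_in] by blast
  show ?thesis using P1 P2 P3 P4 P5 by blast
qed


end
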